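(* Let $H$ be a complex Hilbert space, let $a$ be a compact self-adjoint operator in $K(H)$, and let $\Delta:K(H)\to K(H)$ be a weak-2-local derivation. Then $\Delta|_{K(H)_a}:K(H)_a\to K(H)$ is a continuous linear derivation (with $K(H)$ regarded as a $K(H)_a$-bimodule), where $K(H)_a$ is the C$^*$-subalgebra of $K(H)$ generated by $a$. Furthermore, if $\mathcal{B}$ denotes the commutative C$^*$-subalgebra of $K(H)$ generated by an at most countable family $(p_n)$ of mutually orthogonal minimal projections in $K(H)$, then $\Delta|_{\mathcal{B}}:\mathcal{B}\to K(H)$ is a continuous linear derivation.
   Context: $K(H)$ is the C$^*$-algebra of compact operators on $H$. For a subalgebra $C\subseteq K(H)$, a derivation $C\to K(H)$ is a linear map $D$ with $D(xy)=D(x)y+xD(y)$ for $x,y\in C$. A derivation on a C$^*$-algebra $A$ is a linear map $D:A\to A$ with $D(ab)=D(a)b+aD(b)$. A (not necessarily linear) map $\Delta:A\to A$ is a weak-2-local derivation if for every $a,b\in A$ and every $\phi\in A^*$ there exists a derivation $D_{a,b,\phi}:A\to A$ such that $\phi\Delta(a)=\phi D_{a,b,\phi}(a)$ and $\phi\Delta(b)=\phi D_{a,b,\phi}(b)$. *)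

theory Defs
  imports "HOL-Analysis.Analysis" "HOL-Library.Countable_Set"
begin

class complex_vector = real_vector +
  fixes scaleC :: "complex \<Rightarrow> 'a \<Rightarrow> 'a"  (infixr \<open>*\<^sub>C\<close> 75)
  assumes scaleC_add_right: "c *\<^sub>C (x + y) = c *\<^sub>C x + c *\<^sub>C y"
    and scaleC_add_left: "(b + c) *\<^sub>C x = b *\<^sub>C x + c *\<^sub>C x"
    and scaleC_scaleC: "b *\<^sub>C (c *\<^sub>C x) = (b * c) *\<^sub>C x"
    and scaleC_one: "1 *\<^sub>C x = x"
    and scaleC_of_real: "complex_of_real r *\<^sub>C x = r *\<^sub>R x"

class complex_normed_vector = complex_vector + real_normed_vector +
  assumes norm_scaleC: "norm (c *\<^sub>C x) = cmod c * norm x"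

class complex_inner = complex_normed_vector +
  fixes cinner :: "'a \<Rightarrow> 'a \<Rightarrow> complex"
  assumes cinner_commute: "cinner x y = cnj (cinner y x)"
    and cinner_add_left: "cinner (x + y) z = cinner x z + cinner y z"
    and cinner_scaleC_left: "cinner (c *\<^sub>C x) y = cnj c * cinner x y"
    and cinner_self_real: "Im (cinner x x) = 0"
    and cinner_self_nonneg: "0 \<le> Re (cinner x x)"
    and norm_eq_sqrt_cinner: "norm x = sqrt (Re (cinner x x))"

class chilbert_space = complex_inner + complete_space

text \<open>Operators are functions H \<Rightarrow> H; algebra operations are pointwise sum,
  scalar multiple and composition; the norm is the operator norm onorm.\<close>

definition clinear :: "('a::complex_vector \<Rightarrow> 'a) \<Rightarrow> bool" where
  "clinear T \<longleftrightarrow> (\<forall>x y. T (x + y) = T x + T y) \<and> (\<forall>c x. T (c *\<^sub>C x) = c *\<^sub>C T x)"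

definition opadd :: "('a::complex_vector \<Rightarrow> 'a) \<Rightarrow> ('a \<Rightarrow> 'a) \<Rightarrow> 'a \<Rightarrow> 'a" where
  "opadd S T = (\<lambda>v. S v + T v)"

definition opsub :: "('a::complex_vector \<Rightarrow> 'a) \<Rightarrow> ('a \<Rightarrow> 'a) \<Rightarrow> 'a \<Rightarrow> 'a" where
  "opsub S T = (\<lambda>v. S v - T v)"

definition opscale :: "complex \<Rightarrow> ('a::complex_vector \<Rightarrow> 'a) \<Rightarrow> 'a \<Rightarrow> 'a" where
  "opscale c T = (\<lambda>v. c *\<^sub>C T v)"

definition compact_op :: "('a::complex_normed_vector \<Rightarrow> 'a) \<Rightarrow> bool" where
  "compact_op T \<longleftrightarrow> clinear T \<and> compact (closure (T ` ball 0 1))"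

definition KH :: "('a::chilbert_space \<Rightarrow> 'a) set" where
  "KH = {T. compact_op T}"

definition is_adjoint :: "('a::complex_inner \<Rightarrow> 'a) \<Rightarrow> ('a \<Rightarrow> 'a) \<Rightarrow> bool" where
  "is_adjoint S T \<longleftrightarrow> (\<forall>u v. cinner (T u) v = cinner u (S v))"

definition self_adjoint :: "('a::complex_inner \<Rightarrow> 'a) \<Rightarrow> bool" where
  "self_adjoint T \<longleftrightarrow> is_adjoint T T"

definition lin_on :: "('a::chilbert_space \<Rightarrow> 'a) set \<Rightarrow> (('a \<Rightarrow> 'a) \<Rightarrow> ('a \<Rightarrow> 'a)) \<Rightarrow> bool" where
  "lin_on C D \<longleftrightarrow> (\<forall>x\<in>C. \<forall>y\<in>C. D (opadd x y) = opadd (D x) (D y))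
                 \<and> (\<forall>c. \<forall>x\<in>C. D (opscale c x) = opscale c (D x))"

definition derivation_into_KH :: "('a::chilbert_space \<Rightarrow> 'a) set \<Rightarrow> (('a \<Rightarrow> 'a) \<Rightarrow> ('a \<Rightarrow> 'a)) \<Rightarrow> bool" where
  "derivation_into_KH C D \<longleftrightarrow> (\<forall>x\<in>C. D x \<in> KH) \<and> lin_on C D
     \<and> (\<forall>x\<in>C. \<forall>y\<in>C. D (x \<circ> y) = opadd (D x \<circ> y) (x \<circ> D y))"

definition derivation_KH :: "(('a::chilbert_space \<Rightarrow> 'a) \<Rightarrow> ('a \<Rightarrow> 'a)) \<Rightarrow> bool" where
  "derivation_KH D \<longleftrightarrow> derivation_into_KH KH D"

definition cont_on_ops :: "('a::chilbert_space \<Rightarrow> 'a) set \<Rightarrow> (('a \<Rightarrow> 'a) \<Rightarrow> ('a \<Rightarrow> 'a)) \<Rightarrow> bool" where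
  "cont_on_ops C D \<longleftrightarrow> (\<forall>xs x. (\<forall>n. xs n \<in> C) \<and> x \<in> C \<and>
       (\<lambda>n. onorm (opsub (xs n) x)) \<longlonglongrightarrow> 0 \<longrightarrow>
       (\<lambda>n. onorm (opsub (D (xs n)) (D x))) \<longlonglongrightarrow> 0)"

definition dual_KH :: "((('a::chilbert_space) \<Rightarrow> 'a) \<Rightarrow> complex) set" where
  "dual_KH = {\<phi>. (\<forall>x\<in>KH. \<forall>y\<in>KH. \<phi> (opadd x y) = \<phi> x + \<phi> y)
                 \<and> (\<forall>c. \<forall>x\<in>KH. \<phi> (opscale c x) = c * \<phi> x)
                 \<and> (\<exists>M. \<forall>x\<in>KH. cmod (\<phi> x) \<le> M * onorm x)}"

definition weak_2_local_derivation :: "(('a::chilbert_space \<Rightarrow> 'a) \<Rightarrow> ('a \<Rightarrow> 'a)) \<Rightarrow> bool" where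
  "weak_2_local_derivation \<Delta> \<longleftrightarrow> (\<forall>x\<in>KH. \<Delta> x \<in> KH) \<and>
     (\<forall>a\<in>KH. \<forall>b\<in>KH. \<forall>\<phi>\<in>dual_KH. \<exists>D. derivation_KH D \<and>
         \<phi> (\<Delta> a) = \<phi> (D a) \<and> \<phi> (\<Delta> b) = \<phi> (D b))"

definition cstar_subalg :: "('a::chilbert_space \<Rightarrow> 'a) set \<Rightarrow> bool" where
  "cstar_subalg S \<longleftrightarrow> S \<subseteq> KH
     \<and> (\<forall>x\<in>S. \<forall>y\<in>S. opadd x y \<in> S \<and> x \<circ> y \<in> S)
     \<and> (\<forall>c. \<forall>x\<in>S. opscale c x \<in> S)
     \<and> (\<forall>x\<in>S. \<exists>y\<in>S. is_adjoint y x)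
     \<and> (\<forall>xs x. (\<forall>n. xs n \<in> S) \<and> x \<in> KH \<and> (\<lambda>n. onorm (opsub (xs n) x)) \<longlonglongrightarrow> 0 \<longrightarrow> x \<in> S)"

definition cstar_gen :: "('a::chilbert_space \<Rightarrow> 'a) set \<Rightarrow> ('a \<Rightarrow> 'a) set" where
  "cstar_gen G = \<Inter>{S. cstar_subalg S \<and> G \<subseteq> S}"

definition projection_KH :: "('a::chilbert_space \<Rightarrow> 'a) \<Rightarrow> bool" where
  "projection_KH p \<longleftrightarrow> p \<in> KH \<and> p \<circ> p = p \<and> self_adjoint p"

definition minimal_projection_KH :: "('a::chilbert_space \<Rightarrow> 'a) \<Rightarrow> bool" where
  "minimal_projection_KH p \<longleftrightarrow> projection_KH p \<and> p \<noteq> (\<lambda>_. 0) \<and>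
     (\<forall>q. projection_KH q \<and> q \<circ> p = q \<longrightarrow> q = (\<lambda>_. 0) \<or> q = p)"

definition cont_lin_derivation_on :: "('a::chilbert_space \<Rightarrow> 'a) set \<Rightarrow> (('a \<Rightarrow> 'a) \<Rightarrow> ('a \<Rightarrow> 'a)) \<Rightarrow> bool" where
  "cont_lin_derivation_on C D \<longleftrightarrow> derivation_into_KH C D \<and> cont_on_ops C D"

end

theory Submission
  imports Defs
begin

lemma scaleC_zero_left [simp]: "(0::complex) *\<^sub>C (x::'a::complex_vector) = 0"
  using scaleC_of_real[of 0 x] by simp

lemma scaleC_zero_right [simp]: "c *\<^sub>C (0::'a::complex_vector) = 0"
  using scaleC_add_right[of c 0 0] by simp

lemma scaleC_minus_right: "c *\<^sub>C (- x::'a::complex_vector) = - (c *\<^sub>C x)"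
  using scaleC_add_right[of c x "-x"] by (simp add: add_eq_0_iff)

lemma scaleC_diff_right: "c *\<^sub>C (x - y::'a::complex_vector) = c *\<^sub>C x - c *\<^sub>C y"
  using scaleC_add_right[of c x "-y"] by (simp add: scaleC_minus_right)

lemma scaleC_minus_left: "(- c) *\<^sub>C (x::'a::complex_vector) = - (c *\<^sub>C x)"
  using scaleC_add_left[of c "-c" x] by (simp add: add_eq_0_iff)

lemma scaleC_diff_left: "(b - c) *\<^sub>C (x::'a::complex_vector) = b *\<^sub>C x - c *\<^sub>C x"
  using scaleC_add_left[of b "-c" x] by (simp add: scaleC_minus_left)

lemma scaleC_minus1: "(-1) *\<^sub>C (x::'a::complex_vector) = - x"
  by (simp add: scaleC_minus_left scaleC_one)

lemma bounded_linear_scaleC: "bounded_linear (\<lambda>x::'a::complex_normed_vector. c *\<^sub>C x)"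
proof (rule bounded_linear_intro[where K="cmod c"])
  show "c *\<^sub>C (x + y) = c *\<^sub>C x + c *\<^sub>C y" for x y :: 'a by (rule scaleC_add_right)
  show "c *\<^sub>C (r *\<^sub>R x) = r *\<^sub>R (c *\<^sub>C x)" for r and x :: 'a
    by (metis mult.commute scaleC_of_real scaleC_scaleC)
  show "norm (c *\<^sub>C x) \<le> norm x * cmod c" for x :: 'a by (simp add: norm_scaleC)
qed

lemma cinner_add_right: "cinner x (y + z) = cinner x y + cinner (x::'a::complex_inner) z"
  by (metis cinner_add_left cinner_commute complex_cnj_add)

lemma cinner_scaleC_right: "cinner x (c *\<^sub>C y) = c * cinner (x::'a::complex_inner) y"
  by (metis cinner_commute cinner_scaleC_left complex_cnj_cnj complex_cnj_mult)

lemma cinner_zero_left [simp]: "cinner 0 (x::'a::complex_inner) = 0"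
  using cinner_add_left[of 0 0 x] by simp

lemma cinner_zero_right [simp]: "cinner (x::'a::complex_inner) 0 = 0"
  using cinner_add_right[of x 0 0] by simp

lemma cinner_minus_left: "cinner (- x) (y::'a::complex_inner) = - cinner x y"
  using cinner_add_left[of x "-x" y] by (simp add: add_eq_0_iff)

lemma cinner_minus_right: "cinner x (- y::'a::complex_inner) = - cinner x y"
  using cinner_add_right[of x y "-y"] by (simp add: add_eq_0_iff)

lemma cinner_diff_left: "cinner (x - y) (z::'a::complex_inner) = cinner x z - cinner y z"
  using cinner_add_left[of x "-y" z] by (simp add: cinner_minus_left)

lemma cinner_diff_right: "cinner x (y - z::'a::complex_inner) = cinner x y - cinner x z"
  using cinner_add_right[of x y "-z"] by (simp add: cinner_minus_right)

lemma cinner_scaleR_left: "cinner (r *\<^sub>R x) (y::'a::complex_inner) = of_real r * cinner x y"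
  by (metis cinner_scaleC_left complex_cnj_complex_of_real scaleC_of_real)

lemma cinner_scaleR_right: "cinner x (r *\<^sub>R y::'a::complex_inner) = of_real r * cinner x y"
  by (metis cinner_scaleC_right scaleC_of_real)

lemma norm_sq_cinner: "(norm (x::'a::complex_inner))\<^sup>2 = Re (cinner x x)"
  by (simp add: norm_eq_sqrt_cinner cinner_self_nonneg)

lemma cinner_self_eq: "cinner x x = complex_of_real ((norm (x::'a::complex_inner))\<^sup>2)"
  by (simp add: norm_sq_cinner complex_eq_iff cinner_self_real)

lemma cinner_self_eq_0 [simp]: "cinner x x = 0 \<longleftrightarrow> (x::'a::complex_inner) = 0"
  by (simp add: cinner_self_eq)

lemma Re_cinner_commute: "Re (cinner x (y::'a::complex_inner)) = Re (cinner y x)"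
  by (subst cinner_commute) simp

lemma norm_add_sq: "(norm (x + y::'a::complex_inner))\<^sup>2 = (norm x)\<^sup>2 + (norm y)\<^sup>2 + 2 * Re (cinner x y)"
  by (simp add: norm_sq_cinner cinner_add_left cinner_add_right Re_cinner_commute[of y x])

lemma norm_diff_sq: "(norm (x - y::'a::complex_inner))\<^sup>2 = (norm x)\<^sup>2 + (norm y)\<^sup>2 - 2 * Re (cinner x y)"
  by (simp add: norm_sq_cinner cinner_diff_left cinner_diff_right Re_cinner_commute[of y x])

lemma real_CS: "\<bar>Re (cinner x (y::'a::complex_inner))\<bar> \<le> norm x * norm y"
proof (cases "y = 0")
  case True then show ?thesis by simp
next
  case False
  then have ny: "norm y > 0" by simp
  define t where "t = Re (cinner x y) / (norm y)\<^sup>2"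
  have "0 \<le> (norm (x - t *\<^sub>R y))\<^sup>2" by simp
  also have "\<dots> = (norm x)\<^sup>2 + t\<^sup>2 * (norm y)\<^sup>2 - 2 * t * Re (cinner x y)"
    by (simp add: norm_diff_sq cinner_scaleR_right power_mult_distrib)
  also have "\<dots> = (norm x)\<^sup>2 - (Re (cinner x y))\<^sup>2 / (norm y)\<^sup>2"
    using ny by (simp add: t_def field_simps power2_eq_square)
  finally have "(Re (cinner x y))\<^sup>2 / (norm y)\<^sup>2 \<le> (norm x)\<^sup>2" by simp
  then have "(Re (cinner x y))\<^sup>2 \<le> (norm x)\<^sup>2 * (norm y)\<^sup>2"
    using ny by (simp add: divide_le_eq)
  then have "(Re (cinner x y))\<^sup>2 \<le> (norm x * norm y)\<^sup>2"
    by (simp add: power_mult_distrib)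
  then have "\<bar>Re (cinner x y)\<bar> \<le> \<bar>norm x * norm y\<bar>"
    using abs_le_square_iff by blast
  then show ?thesis by simp
qed

lemma cauchy_schwarz: "cmod (cinner x (y::'a::complex_inner)) \<le> norm x * norm y"
proof (cases "cinner x y = 0")
  case True then show ?thesis by simp
next
  case False
  define c where "c = cnj (cinner x y) / complex_of_real (cmod (cinner x y))"
  have cm: "cmod c = 1" using False by (simp add: c_def norm_divide)
  have "c * cinner x y = cnj (cinner x y) * cinner x y / complex_of_real (cmod (cinner x y))"
    by (simp add: c_def)
  also have "\<dots> = complex_of_real ((cmod (cinner x y))\<^sup>2) / complex_of_real (cmod (cinner x y))"
    by (metis complex_norm_square mult.commute of_real_power)
  also have "\<dots> = complex_of_real (cmod (cinner x y))"
    using False by (simp add: power2_eq_square)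
  finally have "c * cinner x y = complex_of_real (cmod (cinner x y))" .
  then have "cmod (cinner x y) = Re (cinner x (c *\<^sub>C y))"
    by (simp add: cinner_scaleC_right)
  also have "\<dots> \<le> norm x * norm (c *\<^sub>C y)" using real_CS[of x "c *\<^sub>C y"] by linarith
  finally show ?thesis by (simp add: norm_scaleC cm)
qed

lemma clinear_add: "clinear T \<Longrightarrow> T (x + y) = T x + T y"
  by (simp add: clinear_def)

lemma clinear_scaleC: "clinear T \<Longrightarrow> T (c *\<^sub>C x) = c *\<^sub>C T x"
  by (simp add: clinear_def)

lemma clinear_scaleR: "clinear T \<Longrightarrow> T (r *\<^sub>R x) = r *\<^sub>R T x"
  by (metis clinear_scaleC scaleC_of_real)

lemma clinear_linear: "clinear T \<Longrightarrow> linear T"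
  by (rule linearI) (simp_all add: clinear_add clinear_scaleR)

lemma clinear_0: "clinear T \<Longrightarrow> T 0 = 0"
  using clinear_linear linear_0 by blast

lemma clinear_minus: "clinear T \<Longrightarrow> T (- x) = - T x"
  using clinear_linear linear_neg by blast

lemma clinear_diff: "clinear T \<Longrightarrow> T (x - y) = T x - T y"
  using clinear_linear linear_diff by blast

lemma clinear_opadd: "clinear x \<Longrightarrow> clinear y \<Longrightarrow> clinear (opadd x y)"
  unfolding clinear_def opadd_def by (simp add: scaleC_add_right add_ac)

lemma clinear_opscale: "clinear x \<Longrightarrow> clinear (opscale c x)"
  unfolding clinear_def opscale_def by (simp add: scaleC_add_right scaleC_scaleC mult.commute)

lemma clinear_comp: "clinear x \<Longrightarrow> clinear y \<Longrightarrow> clinear (x \<circ> y)"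
  unfolding clinear_def by simp

lemma compact_op_bounded:
  fixes T :: "'a::complex_normed_vector \<Rightarrow> 'a"
  assumes "compact_op T" shows "bounded_linear T"
proof -
  have cl: "clinear T" and K: "compact (closure (T ` ball 0 1))"
    using assms by (auto simp: compact_op_def)
  from K have "bounded (closure (T ` ball 0 1))" by (rule compact_imp_bounded)
  then obtain B where B: "\<And>y. y \<in> closure (T ` ball 0 1) \<Longrightarrow> norm y \<le> B"
    by (meson bounded_iff)
  have nb: "norm (T x) \<le> norm x * (2 * B)" for x
  proof (cases "x = 0")
    case True then show ?thesis using cl by (simp add: clinear_0)
  next
    case False
    define v where "v = (1 / (2 * norm x)) *\<^sub>R x"
    have "norm v < 1" using False by (simp add: v_def)
    then have "T v \<in> closure (T ` ball 0 1)" by (intro closure_subset[THEN subsetD]) auto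
    then have "norm (T v) \<le> B" by (rule B)
    moreover have "T v = (1 / (2 * norm x)) *\<^sub>R T x" using cl by (simp add: v_def clinear_scaleR)
    ultimately have "norm (T x) / (2 * norm x) \<le> B" by simp
    then show ?thesis using False by (simp add: divide_le_eq algebra_simps)
  qed
  show ?thesis
    by (rule bounded_linear_intro[where K="2*B"]) (use cl nb in \<open>auto simp: clinear_add clinear_scaleR\<close>)
qed

lemma compact_opI:
  assumes "clinear T" "compact K" "T ` ball 0 1 \<subseteq> K"
  shows "compact_op T"
proof -
  have "closure (T ` ball 0 1) \<subseteq> K"
    using assms by (simp add: closure_minimal compact_imp_closed)
  then have "closure (T ` ball 0 1) = K \<inter> closure (T ` ball 0 1)" by blast
  moreover have "compact (K \<inter> closure (T ` ball 0 1))"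
    using assms(2) by (simp add: compact_Int_closed)
  ultimately show ?thesis using assms(1) by (simp add: compact_op_def)
qed

lemma KH_bl: "T \<in> KH \<Longrightarrow> bounded_linear T"
  by (simp add: KH_def compact_op_bounded)

lemma KH_cl: "T \<in> KH \<Longrightarrow> clinear T"
  by (simp add: KH_def compact_op_def)

lemma KH_onorm: "T \<in> KH \<Longrightarrow> norm (T x) \<le> onorm T * norm x"
  by (simp add: KH_bl onorm)

lemma KH_compact: "T \<in> KH \<Longrightarrow> compact (closure (T ` ball 0 1))"
  by (simp add: KH_def compact_op_def)

lemma KH_zero: "(\<lambda>_. 0) \<in> (KH :: ('a::chilbert_space \<Rightarrow> 'a) set)"
proof -
  have "compact_op (\<lambda>_::'a. 0::'a)"
    by (rule compact_opI[where K="{0}"]) (auto simp: clinear_def)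
  then show ?thesis by (simp add: KH_def)
qed

lemma KH_add: assumes "x \<in> KH" "y \<in> KH" shows "opadd x y \<in> KH"
proof -
  let ?K1 = "closure (x ` ball 0 1)" and ?K2 = "closure (y ` ball 0 1)"
  have "compact_op (opadd x y)"
  proof (rule compact_opI[where K="{a + b |a b. a \<in> ?K1 \<and> b \<in> ?K2}"])
    show "clinear (opadd x y)" using assms by (simp add: clinear_opadd KH_cl)
    show "compact {a + b |a b. a \<in> ?K1 \<and> b \<in> ?K2}"
      using assms by (intro compact_sums KH_compact)
    show "opadd x y ` ball 0 1 \<subseteq> {a + b |a b. a \<in> ?K1 \<and> b \<in> ?K2}"
      by (auto simp: opadd_def intro!: closure_subset[THEN subsetD])
  qed
  then show ?thesis by (simp add: KH_def)
qed

lemma KH_scale: assumes "x \<in> KH" shows "opscale c x \<in> KH"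
proof -
  let ?K1 = "closure (x ` ball 0 1)"
  have "compact_op (opscale c x)"
  proof (rule compact_opI[where K="(\<lambda>v. c *\<^sub>C v) ` ?K1"])
    show "clinear (opscale c x)" using assms by (simp add: clinear_opscale KH_cl)
    show "compact ((\<lambda>v. c *\<^sub>C v) ` ?K1)"
      using assms by (intro compact_continuous_image KH_compact
          bounded_linear.continuous_on[OF bounded_linear_scaleC] continuous_on_id)
    show "opscale c x ` ball 0 1 \<subseteq> (\<lambda>v. c *\<^sub>C v) ` ?K1"
      by (auto simp: opscale_def intro!: imageI closure_subset[THEN subsetD])
  qed
  then show ?thesis by (simp add: KH_def)
qed

lemma opsub_eq: "opsub x y = opadd x (opscale (-1) y)"
  by (simp add: opsub_def opadd_def opscale_def scaleC_minus1 fun_eq_iff)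

lemma KH_sub: "x \<in> KH \<Longrightarrow> y \<in> KH \<Longrightarrow> opsub x y \<in> KH"
  by (simp add: opsub_eq KH_add KH_scale)

lemma KH_comp:
  assumes "x \<in> KH" "clinear y" "bounded_linear y"
  shows "x \<circ> y \<in> KH"
proof -
  define R where "R = onorm y + 1"
  have R: "R > 0" using onorm_pos_le[OF assms(3)] by (simp add: R_def)
  let ?K1 = "closure (x ` ball 0 1)"
  have "compact_op (x \<circ> y)"
  proof (rule compact_opI[where K="(\<lambda>v. R *\<^sub>R v) ` ?K1"])
    show "clinear (x \<circ> y)" using assms by (simp add: clinear_comp KH_cl)
    show "compact ((\<lambda>v. R *\<^sub>R v) ` ?K1)"
      using assms by (intro compact_scaling KH_compact)
    show "(x \<circ> y) ` ball 0 1 \<subseteq> (\<lambda>v. R *\<^sub>R v) ` ?K1"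
    proof
      fix z assume "z \<in> (x \<circ> y) ` ball 0 1"
      then obtain v where v: "norm v < 1" "z = x (y v)" by auto
      have "norm (y v) \<le> onorm y * norm v" using assms(3) by (rule onorm)
      also have "\<dots> \<le> onorm y" using v onorm_pos_le[OF assms(3)]
        by (simp add: mult_left_le)
      finally have "norm ((1/R) *\<^sub>R y v) < 1" using R by (simp add: R_def)
      moreover have "z = R *\<^sub>R x ((1/R) *\<^sub>R y v)"
        using v R KH_cl[OF assms(1)] by (simp add: clinear_scaleR)
      ultimately show "z \<in> (\<lambda>v. R *\<^sub>R v) ` ?K1"
        by (auto intro!: imageI closure_subset[THEN subsetD])
    qed
  qed
  then show ?thesis by (simp add: KH_def)
qed

lemma KH_comp2: "x \<in> KH \<Longrightarrow> y \<in> KH \<Longrightarrow> x \<circ> y \<in> KH"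
  by (simp add: KH_comp KH_bl KH_cl)

lemma rank1_cl: "clinear (\<lambda>z. cinner u z *\<^sub>C w)"
  by (simp add: clinear_def cinner_add_right cinner_scaleC_right scaleC_add_left scaleC_scaleC)

lemma bounded_linear_scaleC_left: "bounded_linear (\<lambda>c::complex. c *\<^sub>C (w::'a::complex_normed_vector))"
proof (rule bounded_linear_intro[where K="norm w"])
  show "(x + y) *\<^sub>C w = x *\<^sub>C w + y *\<^sub>C w" for x y by (rule scaleC_add_left)
  show "(r *\<^sub>R x) *\<^sub>C w = r *\<^sub>R (x *\<^sub>C w)" for r x
    by (metis scaleC_of_real scaleC_scaleC scaleR_conv_of_real)
  show "norm (x *\<^sub>C w) \<le> cmod x * norm w" for x by (simp add: norm_scaleC)
qed

lemma KH_rank1: "(\<lambda>z. cinner u z *\<^sub>C w) \<in> (KH :: ('a::chilbert_space \<Rightarrow> 'a) set)"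
proof -
  have "compact_op (\<lambda>z::'a. cinner u z *\<^sub>C w)"
  proof (rule compact_opI[where K="(\<lambda>c. c *\<^sub>C w) ` cball 0 (norm u)"])
    show "clinear (\<lambda>z. cinner u z *\<^sub>C w)" by (rule rank1_cl)
    show "compact ((\<lambda>c. c *\<^sub>C w) ` cball 0 (norm u))"
      by (intro compact_continuous_image compact_cball
          bounded_linear.continuous_on[OF bounded_linear_scaleC_left] continuous_on_id)
    show "(\<lambda>z. cinner u z *\<^sub>C w) ` ball 0 1 \<subseteq> (\<lambda>c. c *\<^sub>C w) ` cball 0 (norm u)"
    proof
      fix y assume "y \<in> (\<lambda>z. cinner u z *\<^sub>C w) ` ball 0 1"
      then obtain z where z: "norm z < 1" "y = cinner u z *\<^sub>C w" by auto
      have "cmod (cinner u z) \<le> norm u * norm z" by (rule cauchy_schwarz)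
      also have "\<dots> \<le> norm u" using z by (simp add: mult_left_le)
      finally show "y \<in> (\<lambda>c. c *\<^sub>C w) ` cball 0 (norm u)" using z by auto
    qed
  qed
  then show ?thesis by (simp add: KH_def)
qed

section \<open>Projection theorem\<close>

definition csubspace :: "'a::complex_vector set \<Rightarrow> bool" where
  "csubspace N \<longleftrightarrow> 0 \<in> N \<and> (\<forall>x\<in>N. \<forall>y\<in>N. x + y \<in> N) \<and> (\<forall>c. \<forall>x\<in>N. c *\<^sub>C x \<in> N)"

lemma parallelogram:
  "(norm (a - b::'a::complex_inner))\<^sup>2 + (norm (a + b))\<^sup>2 = 2 * (norm a)\<^sup>2 + 2 * (norm b)\<^sup>2"
  by (simp add: norm_add_sq norm_diff_sq)

lemma norm_scaleC_sq: "(norm (c *\<^sub>C x::'a::complex_normed_vector))\<^sup>2 = (cmod c)\<^sup>2 * (norm x)\<^sup>2"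
  by (simp add: norm_scaleC power_mult_distrib)

lemma proj_exists:
  fixes z :: "'a::chilbert_space"
  assumes N: "csubspace N" "closed N"
  shows "\<exists>n\<in>N. \<forall>m\<in>N. cinner m (z - n) = 0"
proof -
  have N0: "0 \<in> N" and Nadd: "\<And>x y. x \<in> N \<Longrightarrow> y \<in> N \<Longrightarrow> x + y \<in> N"
    and Nsc: "\<And>c x. x \<in> N \<Longrightarrow> c *\<^sub>C x \<in> N"
    using N by (auto simp: csubspace_def)
  have NscR: "r *\<^sub>R x \<in> N" if "x \<in> N" for r x by (metis Nsc scaleC_of_real that)
  define d where "d = Inf ((\<lambda>m. norm (z - m)) ` N)"
  have bdd: "bdd_below ((\<lambda>m. norm (z - m)) ` N)" by (rule bdd_belowI[where m=0]) auto
  have dle: "d \<le> norm (z - m)" if "m \<in> N" for m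
    unfolding d_def using bdd that by (simp add: cInf_lower)
  have d0: "0 \<le> d" unfolding d_def using N0 by (intro cInf_greatest) auto
  have "\<exists>m\<in>N. (norm (z - m))\<^sup>2 < d\<^sup>2 + 1 / real (Suc k)" for k
  proof -
    have "sqrt (d\<^sup>2) < sqrt (d\<^sup>2 + 1 / real (Suc k))"
      by (intro real_sqrt_less_mono) simp
    then have "d < sqrt (d\<^sup>2 + 1 / real (Suc k))" using d0 by simp
    then have "\<exists>x\<in>(\<lambda>m. norm (z - m)) ` N. x < sqrt (d\<^sup>2 + 1 / real (Suc k))"
      using cInf_less_iff[OF _ bdd] N0 unfolding d_def by blast
    then obtain m where m: "m \<in> N" "norm (z - m) < sqrt (d\<^sup>2 + 1 / real (Suc k))"
      by blast
    have "(norm (z - m))\<^sup>2 < (sqrt (d\<^sup>2 + 1 / real (Suc k)))\<^sup>2"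
      by (rule power_strict_mono) (use m in auto)
    moreover have "(sqrt (d\<^sup>2 + 1 / real (Suc k)))\<^sup>2 = d\<^sup>2 + 1 / real (Suc k)"
      by (intro real_sqrt_pow2 add_nonneg_nonneg) auto
    ultimately show ?thesis using m by auto
  qed
  then obtain ms where ms: "\<And>k. ms k \<in> N" "\<And>k. (norm (z - ms k))\<^sup>2 < d\<^sup>2 + 1 / real (Suc k)"
    by metis
  have diffb: "(norm (ms i - ms j))\<^sup>2 \<le> 2 / real (Suc i) + 2 / real (Suc j)" for i j
  proof -
    let ?a = "z - ms i" and ?b = "z - ms j"
    have mid: "(1/2) *\<^sub>R (ms i + ms j) \<in> N" using ms by (intro NscR Nadd)
    have "?a + ?b = 2 *\<^sub>R (z - (1/2) *\<^sub>R (ms i + ms j))"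
      by (simp add: algebra_simps scaleR_add_right) (metis scaleR_2)
    then have "(norm (?a + ?b))\<^sup>2 = 4 * (norm (z - (1/2) *\<^sub>R (ms i + ms j)))\<^sup>2"
      by (simp add: power_mult_distrib)
    moreover have "d\<^sup>2 \<le> (norm (z - (1/2) *\<^sub>R (ms i + ms j)))\<^sup>2"
      using dle[OF mid] d0 by (simp add: power_mono)
    ultimately have "4 * d\<^sup>2 \<le> (norm (?a + ?b))\<^sup>2" by simp
    moreover have "?a - ?b = ms j - ms i" by simp
    moreover note parallelogram[of ?a ?b] ms(2)[of i] ms(2)[of j]
    ultimately have "(norm (ms j - ms i))\<^sup>2 \<le> 2 / real (Suc i) + 2 / real (Suc j)" by simp
    then show ?thesis by (simp add: norm_minus_commute)
  qed
  have "Cauchy ms"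
  proof (rule CauchyI)
    fix e :: real assume e: "0 < e"
    obtain M :: nat where M: "4 / e\<^sup>2 < real M" using reals_Archimedean2 by blast
    show "\<exists>M. \<forall>m\<ge>M. \<forall>n\<ge>M. norm (ms m - ms n) < e"
    proof (intro exI allI impI)
      fix i j assume ij: "M \<le> i" "M \<le> j"
      have "2 / real (Suc i) < e\<^sup>2 / 2"
      proof -
        have "4 / e\<^sup>2 < real (Suc i)" using M ij by linarith
        then show ?thesis using e by (simp add: field_simps)
      qed
      moreover have "2 / real (Suc j) < e\<^sup>2 / 2"
      proof -
        have "4 / e\<^sup>2 < real (Suc j)" using M ij by linarith
        then show ?thesis using e by (simp add: field_simps)
      qed
      ultimately have "(norm (ms i - ms j))\<^sup>2 < e\<^sup>2" using diffb[of i j] by simp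
      then show "norm (ms i - ms j) < e" using e by (simp add: power_less_imp_less_base)
    qed
  qed
  then obtain n where lim: "ms \<longlonglongrightarrow> n" using Cauchy_convergent_iff convergent_def by blast
  have nN: "n \<in> N" using closed_sequentially[OF N(2) ms(1) lim] .
  have nle: "(norm (z - n))\<^sup>2 \<le> d\<^sup>2"
  proof (rule LIMSEQ_le)
    show "(\<lambda>k. (norm (z - ms k))\<^sup>2) \<longlonglongrightarrow> (norm (z - n))\<^sup>2"
      by (intro tendsto_intros lim)
    show "(\<lambda>k. d\<^sup>2 + 1 / real (Suc k)) \<longlonglongrightarrow> d\<^sup>2"
      using tendsto_add[OF tendsto_const LIMSEQ_inverse_real_of_nat, of "d\<^sup>2"]
      by (simp add: inverse_eq_divide)
    show "\<exists>N. \<forall>k\<ge>N. (norm (z - ms k))\<^sup>2 \<le> d\<^sup>2 + 1 / real (Suc k)"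
      using ms(2) less_imp_le by blast
  qed
  have opt: "(norm (z - n))\<^sup>2 \<le> (norm (z - m))\<^sup>2" if "m \<in> N" for m
    using nle dle[OF that] d0 by (meson order.trans power_mono)
  show ?thesis
  proof (intro bexI[OF _ nN] ballI)
    fix m assume mN: "m \<in> N"
    define c where "c = cinner m (z - n)"
    define w where "w = z - n"
    show "cinner m (z - n) = 0"
    proof (rule ccontr)
      assume cne: "cinner m (z - n) \<noteq> 0"
      then have c0: "cmod c > 0" by (simp add: c_def)
      define t :: real where "t = 1 / ((norm m)\<^sup>2 + 1)"
      have t0: "t > 0" unfolding t_def by (simp add: add_nonneg_pos)
      define s where "s = complex_of_real t * c"
      have "n + s *\<^sub>C m \<in> N" using nN mN by (intro Nadd Nsc)
      from opt[OF this] have "(norm w)\<^sup>2 \<le> (norm (w - s *\<^sub>C m))\<^sup>2"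
        by (simp add: w_def diff_diff_eq)
      also have "(norm (w - s *\<^sub>C m))\<^sup>2 = (norm w)\<^sup>2 + (cmod s)\<^sup>2 * (norm m)\<^sup>2 - 2 * Re (cinner w (s *\<^sub>C m))"
        by (simp add: norm_diff_sq norm_scaleC_sq)
      also have "cinner w (s *\<^sub>C m) = complex_of_real (t * (cmod c)\<^sup>2)"
      proof -
        have "cinner w m = cnj c" by (simp add: c_def w_def cinner_commute[of m])
        then have "cinner w (s *\<^sub>C m) = complex_of_real t * (c * cnj c)"
          by (simp add: cinner_scaleC_right s_def mult.assoc)
        then show ?thesis by (simp add: complex_norm_square[symmetric])
      qed
      also have "(cmod s)\<^sup>2 = t\<^sup>2 * (cmod c)\<^sup>2" using t0 by (simp add: s_def norm_mult power_mult_distrib)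
      finally have "2 * (t * (cmod c)\<^sup>2) \<le> t\<^sup>2 * (cmod c)\<^sup>2 * (norm m)\<^sup>2" by simp
      then have A: "2 * (t * (cmod c)\<^sup>2) \<le> (t * (norm m)\<^sup>2) * (t * (cmod c)\<^sup>2)"
        by (simp add: algebra_simps power2_eq_square)
      have B: "t * (norm m)\<^sup>2 < 1" unfolding t_def by (simp add: add_nonneg_pos divide_less_eq)
      have C: "t * (cmod c)\<^sup>2 > 0" using t0 c0 by simp
      have "(t * (norm m)\<^sup>2) * (t * (cmod c)\<^sup>2) < 1 * (t * (cmod c)\<^sup>2)"
        using B C by (rule mult_strict_right_mono)
      then show False using A C by linarith
    qed
  qed
qed

lemma perp_dense:
  fixes E :: "'a::chilbert_space set"
  assumes perp: "\<And>z. (\<forall>e\<in>E. cinner e z = 0) \<Longrightarrow> z = 0"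
    and N: "csubspace N" "closed N" "E \<subseteq> N"
  shows "N = UNIV"
proof -
  have "z \<in> N" for z
  proof -
    obtain n where n: "n \<in> N" "\<And>m. m \<in> N \<Longrightarrow> cinner m (z - n) = 0"
      using proj_exists[OF N(1,2)] by blast
    have "z - n = 0" using N(3) by (intro perp) (auto intro: n(2))
    then show ?thesis using n by simp
  qed
  then show ?thesis by auto
qed

lemma kernel_csubspace: "clinear T \<Longrightarrow> csubspace {v. T v = 0}"
  by (simp add: csubspace_def clinear_0 clinear_add clinear_scaleC)

lemma kernel_closed: "bounded_linear T \<Longrightarrow> closed {v. T v = 0}"
  by (intro closed_Collect_eq linear_continuous_on continuous_on_const)

lemma vanish_on_E:
  fixes E :: "'a::chilbert_space set"
  assumes perp: "\<And>z. (\<forall>e\<in>E. cinner e z = 0) \<Longrightarrow> z = 0"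
    and T: "clinear T" "bounded_linear T" and van: "\<And>e. e \<in> E \<Longrightarrow> T e = 0"
  shows "T = (\<lambda>_. 0)"
proof -
  have "{v. T v = 0} = UNIV"
    using van by (intro perp_dense[OF perp] kernel_csubspace kernel_closed T) auto
  then show ?thesis by auto
qed

lemma bounded_linear_cinner_right: "bounded_linear (\<lambda>v. cinner e (v::'a::complex_inner))"
proof (rule bounded_linear_intro[where K="norm e"])
  show "cinner e (x + y) = cinner e x + cinner e y" for x y by (rule cinner_add_right)
  show "cinner e (r *\<^sub>R x) = r *\<^sub>R cinner e x" for r x by (simp add: cinner_scaleR_right scaleR_conv_of_real)
  show "cmod (cinner e x) \<le> norm x * norm e" for x using cauchy_schwarz[of e x] by (simp add: mult.commute)
qed

lemma bounded_linear_cinner_left: "bounded_linear (\<lambda>v. cinner (v::'a::complex_inner) e)"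
proof (rule bounded_linear_intro[where K="norm e"])
  show "cinner (x + y) e = cinner x e + cinner y e" for x y by (rule cinner_add_left)
  show "cinner (r *\<^sub>R x) e = r *\<^sub>R cinner x e" for r x by (simp add: cinner_scaleR_left scaleR_conv_of_real)
  show "cmod (cinner x e) \<le> norm x * norm e" for x using cauchy_schwarz[of x e] by simp
qed

lemma tendsto_cinner_right: "f \<longlonglongrightarrow> L \<Longrightarrow> (\<lambda>n. cinner e (f n)) \<longlonglongrightarrow> cinner e (L::'a::complex_inner)"
  by (rule bounded_linear.tendsto[OF bounded_linear_cinner_right])

lemma tendsto_cinner_left: "f \<longlonglongrightarrow> L \<Longrightarrow> (\<lambda>n. cinner (f n) e) \<longlonglongrightarrow> cinner (L::'a::complex_inner) e"
  by (rule bounded_linear.tendsto[OF bounded_linear_cinner_left])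

lemma tendsto_scaleC: "f \<longlonglongrightarrow> L \<Longrightarrow> (\<lambda>n. c *\<^sub>C f n) \<longlonglongrightarrow> c *\<^sub>C (L::'a::complex_normed_vector)"
  by (rule bounded_linear.tendsto[OF bounded_linear_scaleC])

lemma tendsto_scaleC_left: "f \<longlonglongrightarrow> L \<Longrightarrow> (\<lambda>n. f n *\<^sub>C e) \<longlonglongrightarrow> L *\<^sub>C (e::'a::complex_normed_vector)"
  by (rule bounded_linear.tendsto[OF bounded_linear_scaleC_left])

lemma eig_limit:
  fixes e :: "'a::complex_inner"
  assumes lim: "f \<longlonglongrightarrow> L" and eig: "\<And>n. \<exists>c. f n = c *\<^sub>C e"
  shows "\<exists>c. L = c *\<^sub>C e"
proof (cases "e = 0")
  case True
  then have "f = (\<lambda>n. 0)" using eig by (auto simp: fun_eq_iff)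
  then have "L = 0" using lim LIMSEQ_unique tendsto_const by metis
  then show ?thesis by (simp add: True)
next
  case False
  have fe: "f n = (cinner e (f n) / cinner e e) *\<^sub>C e" for n
  proof -
    obtain c where c: "f n = c *\<^sub>C e" using eig by blast
    then show ?thesis using False by (simp add: cinner_scaleC_right)
  qed
  have "(\<lambda>n. (cinner e (f n) / cinner e e) *\<^sub>C e) \<longlonglongrightarrow> (cinner e L / cinner e e) *\<^sub>C e"
    by (intro tendsto_scaleC_left tendsto_divide tendsto_const tendsto_cinner_right lim) (use False in simp)
  then have "f \<longlonglongrightarrow> (cinner e L / cinner e e) *\<^sub>C e" using fe by simp
  then show ?thesis using LIMSEQ_unique lim by blast
qed

lemma onorm_opsub_commute: "onorm (opsub x y) = onorm (opsub y x)"
proof -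
  have "opsub y x = (\<lambda>v. - opsub x y v)" by (simp add: opsub_def fun_eq_iff)
  then show ?thesis by (simp add: onorm_neg)
qed

lemma onorm_KH_nonneg: "x \<in> KH \<Longrightarrow> 0 \<le> onorm x"
  by (simp add: KH_bl onorm_pos_le)

lemma opsub_apply: "opsub x y v = x v - y v"
  by (simp add: opsub_def)

lemma conv_pointwise:
  assumes "\<And>n. xs n \<in> KH" "x \<in> KH" "(\<lambda>n. onorm (opsub (xs n) x)) \<longlonglongrightarrow> 0"
  shows "(\<lambda>n. xs n v) \<longlonglongrightarrow> x v"
proof -
  have "(\<lambda>n. xs n v - x v) \<longlonglongrightarrow> 0"
  proof (rule Lim_null_comparison)
    show "\<forall>\<^sub>F n in sequentially. norm (xs n v - x v) \<le> onorm (opsub (xs n) x) * norm v"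
      using KH_onorm[OF KH_sub[OF assms(1) assms(2)], of _ v] by (simp add: opsub_apply)
    show "(\<lambda>n. onorm (opsub (xs n) x) * norm v) \<longlonglongrightarrow> 0"
      using tendsto_mult[OF assms(3) tendsto_const, of "norm v"] by simp
  qed
  then have "(\<lambda>n. (xs n v - x v) + x v) \<longlonglongrightarrow> 0 + x v" by (intro tendsto_add tendsto_const)
  then show ?thesis by simp
qed

lemma onorm_triangle_ops:
  assumes "x \<in> KH" "y \<in> KH" "z \<in> KH"
  shows "onorm (opsub x z) \<le> onorm (opsub x y) + onorm (opsub y z)"
proof -
  have "opsub x z = (\<lambda>v. opsub x y v + opsub y z v)" by (simp add: opsub_def fun_eq_iff)
  then show ?thesis using assms by (simp add: onorm_triangle KH_bl KH_sub)
qed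

lemma KH_complete:
  fixes xs :: "nat \<Rightarrow> 'a::chilbert_space \<Rightarrow> 'a"
  assumes xs: "\<And>n. xs n \<in> KH"
    and cauchy: "\<And>e. e > 0 \<Longrightarrow> \<exists>N. \<forall>m\<ge>N. \<forall>n\<ge>N. onorm (opsub (xs m) (xs n)) < e"
  shows "\<exists>x\<in>KH. (\<lambda>n. onorm (opsub (xs n) x)) \<longlonglongrightarrow> 0"
proof -
  have bnd: "norm (xs m v - xs n v) \<le> onorm (opsub (xs m) (xs n)) * norm v" for m n v
    using KH_onorm[OF KH_sub[OF xs xs], of m n v] by (simp add: opsub_apply)
  have cv: "Cauchy (\<lambda>n. xs n v)" for v
  proof (rule CauchyI)
    fix e :: real assume e: "e > 0"
    obtain N where N: "\<And>m n. m \<ge> N \<Longrightarrow> n \<ge> N \<Longrightarrow> onorm (opsub (xs m) (xs n)) < e / (norm v + 1)"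
      using cauchy[of "e / (norm v + 1)"] e by (auto simp: add_nonneg_pos)
    show "\<exists>M. \<forall>m\<ge>M. \<forall>n\<ge>M. norm (xs m v - xs n v) < e"
    proof (intro exI allI impI)
      fix m n assume "N \<le> m" "N \<le> n"
      then have "onorm (opsub (xs m) (xs n)) < e / (norm v + 1)" by (rule N)
      then have "onorm (opsub (xs m) (xs n)) * norm v \<le> e / (norm v + 1) * norm v"
        by (intro mult_right_mono) simp_all
      also have "\<dots> < e"
      proof -
        have p: "0 < norm v + 1" by (simp add: add_nonneg_pos)
        have "e * norm v < e * (norm v + 1)" using e by simp
        then show ?thesis using p by (simp add: pos_divide_less_eq)
      qed
      finally show "norm (xs m v - xs n v) < e" using bnd[where m=m and n=n and v=v] by linarith
    qed
  qed
  define x where "x v = lim (\<lambda>n. xs n v)" for v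
  have lim: "(\<lambda>n. xs n v) \<longlonglongrightarrow> x v" for v
    using cv[of v] by (simp add: x_def Cauchy_convergent_iff convergent_LIMSEQ_iff)
  have cl: "clinear x"
    unfolding clinear_def
  proof (intro conjI allI)
    fix a b
    have "(\<lambda>n. xs n (a + b)) \<longlonglongrightarrow> x a + x b"
      using tendsto_add[OF lim[of a] lim[of b]] xs by (simp add: KH_cl clinear_add)
    then show "x (a + b) = x a + x b" using lim[of "a+b"] LIMSEQ_unique by blast
  next
    fix c a
    have "(\<lambda>n. xs n (c *\<^sub>C a)) \<longlonglongrightarrow> c *\<^sub>C x a"
      using tendsto_scaleC[OF lim[of a]] xs by (simp add: KH_cl clinear_scaleC)
    then show "x (c *\<^sub>C a) = c *\<^sub>C x a" using lim[of "c *\<^sub>C a"] LIMSEQ_unique by blast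
  qed
  have unif: "\<exists>N. \<forall>n\<ge>N. \<forall>v. norm (xs n v - x v) \<le> e * norm v" if e: "e > 0" for e
  proof -
    obtain N where N: "\<And>m n. m \<ge> N \<Longrightarrow> n \<ge> N \<Longrightarrow> onorm (opsub (xs m) (xs n)) < e"
      using cauchy[OF e] by blast
    show ?thesis
    proof (intro exI allI impI)
      fix n v assume n: "N \<le> n"
      show "norm (xs n v - x v) \<le> e * norm v"
      proof (rule LIMSEQ_le_const2)
        show "(\<lambda>m. norm (xs n v - xs m v)) \<longlonglongrightarrow> norm (xs n v - x v)"
          by (intro tendsto_intros lim)
        show "\<exists>M. \<forall>m\<ge>M. norm (xs n v - xs m v) \<le> e * norm v"
        proof (intro exI allI impI)
          fix m assume "N \<le> m"
          then have "onorm (opsub (xs n) (xs m)) \<le> e" using N n by (simp add: less_imp_le)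
          then have "onorm (opsub (xs n) (xs m)) * norm v \<le> e * norm v" by (simp add: mult_right_mono)
          then show "norm (xs n v - xs m v) \<le> e * norm v" using bnd[where m=n and n=m and v=v] by linarith
        qed
      qed
    qed
  qed
  obtain N1 where N1: "\<And>n v. n \<ge> N1 \<Longrightarrow> norm (xs n v - x v) \<le> 1 * norm v"
    using unif[of 1] by auto
  have xb: "norm (x v) \<le> norm v * (onorm (xs N1) + 1)" for v
  proof -
    have "norm (x v) \<le> norm (xs N1 v) + norm (xs N1 v - x v)"
      by (metis add.commute norm_triangle_sub norm_minus_commute)
    also have "\<dots> \<le> onorm (xs N1) * norm v + norm v" using N1[of N1 v] KH_onorm[OF xs] by (intro add_mono) auto
    finally show ?thesis by (simp add: algebra_simps)
  qed
  have bl: "bounded_linear x"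
    by (rule bounded_linear_intro[where K="onorm (xs N1) + 1"])
       (use cl xb in \<open>auto simp: clinear_add clinear_scaleR\<close>)
  have conv: "(\<lambda>n. onorm (opsub (xs n) x)) \<longlonglongrightarrow> 0"
  proof (rule LIMSEQ_I)
    fix r :: real assume r: "r > 0"
    obtain N where N: "\<And>n v. n \<ge> N \<Longrightarrow> norm (xs n v - x v) \<le> (r/2) * norm v"
      using unif[of "r/2"] r by auto
    show "\<exists>no. \<forall>n\<ge>no. norm (onorm (opsub (xs n) x) - 0) < r"
    proof (intro exI allI impI)
      fix n assume "N \<le> n"
      then have le: "onorm (opsub (xs n) x) \<le> r/2"
        using r N by (intro onorm_bound) (auto simp: opsub_apply)
      have "0 \<le> onorm (opsub (xs n) x)"
      proof (rule onorm_pos_le)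
        show "bounded_linear (opsub (xs n) x)"
          unfolding opsub_def using KH_bl[OF xs] bl by (rule bounded_linear_sub)
      qed
      then show "norm (onorm (opsub (xs n) x) - 0) < r" using le r by simp
    qed
  qed
  have "compact (closure (x ` ball 0 1))"
  proof -
    have tb: "Met_TC.mtotally_bounded (x ` ball 0 1)"
      unfolding Met_TC.mtotally_bounded_def mball_eq_ball
    proof (intro allI impI)
      fix \<epsilon> :: real assume \<epsilon>: "\<epsilon> > 0"
      obtain n where n: "\<And>v. norm (xs n v - x v) \<le> (\<epsilon>/3) * norm v"
        using unif[of "\<epsilon>/3"] \<epsilon> by auto
      have close: "norm (xs n v - x v) < \<epsilon>/3" if "v \<in> ball 0 1" for v
      proof -
        have "(\<epsilon>/3) * norm v < \<epsilon>/3" using that \<epsilon> by simp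
        then show ?thesis using n[of v] by linarith
      qed
      have "Met_TC.mtotally_bounded (xs n ` ball 0 1)"
        using KH_compact[OF xs[of n]]
        by (simp add: Met_TC.mtotally_bounded_eq_compact_closure_of complete_UNIV)
      then obtain K where K: "finite K" "K \<subseteq> xs n ` ball 0 1" "xs n ` ball 0 1 \<subseteq> (\<Union>k\<in>K. ball k (\<epsilon>/3))"
        unfolding Met_TC.mtotally_bounded_def mball_eq_ball using \<epsilon> by (meson divide_pos_pos zero_less_numeral)
      define pre where "pre k = (SOME v. v \<in> ball 0 1 \<and> xs n v = k)" for k
      have pre: "pre k \<in> ball 0 1 \<and> xs n (pre k) = k" if "k \<in> K" for k
        unfolding pre_def by (rule someI_ex) (use that K(2) in blast)
      show "\<exists>K'. finite K' \<and> K' \<subseteq> x ` ball 0 1 \<and> x ` ball 0 1 \<subseteq> (\<Union>k\<in>K'. ball k \<epsilon>)"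
      proof (intro exI conjI)
        show "finite ((\<lambda>k. x (pre k)) ` K)" using K(1) by simp
        show "(\<lambda>k. x (pre k)) ` K \<subseteq> x ` ball 0 1" using pre by auto
        show "x ` ball 0 1 \<subseteq> (\<Union>k\<in>(\<lambda>k. x (pre k)) ` K. ball k \<epsilon>)"
        proof
          fix y assume "y \<in> x ` ball 0 1"
          then obtain v where v: "v \<in> ball 0 1" "y = x v" by auto
          then obtain k where k: "k \<in> K" "xs n v \<in> ball k (\<epsilon>/3)" using K(3) by blast
          have "dist (x (pre k)) y \<le> norm (x (pre k) - xs n (pre k)) + norm (xs n (pre k) - xs n v) + norm (xs n v - x v)"
          proof -
            have "dist (x (pre k)) y = norm (((x (pre k) - xs n (pre k)) + (xs n (pre k) - xs n v)) + (xs n v - x v))"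
              unfolding v(2) dist_norm by simp
            also have "\<dots> \<le> norm ((x (pre k) - xs n (pre k)) + (xs n (pre k) - xs n v)) + norm (xs n v - x v)"
              by (rule norm_triangle_ineq)
            also have "\<dots> \<le> norm (x (pre k) - xs n (pre k)) + norm (xs n (pre k) - xs n v) + norm (xs n v - x v)"
              by (intro add_right_mono norm_triangle_ineq)
            finally show ?thesis .
          qed
          also have "\<dots> < \<epsilon>/3 + \<epsilon>/3 + \<epsilon>/3"
          proof -
            have "norm (x (pre k) - xs n (pre k)) < \<epsilon>/3"
              using close[of "pre k"] pre[OF k(1)] by (simp add: norm_minus_commute)
            moreover have "norm (xs n (pre k) - xs n v) < \<epsilon>/3"
              using k pre[OF k(1)] by (simp add: dist_norm)
            moreover have "norm (xs n v - x v) < \<epsilon>/3" using close v by simp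
            ultimately show ?thesis by linarith
          qed
          finally show "y \<in> (\<Union>k\<in>(\<lambda>k. x (pre k)) ` K. ball k \<epsilon>)" using k(1) by auto
        qed
      qed
    qed
    then show ?thesis
      by (simp add: Met_TC.mtotally_bounded_eq_compact_closure_of complete_UNIV)
  qed
  then have "x \<in> KH" using cl by (simp add: KH_def compact_op_def)
  then show ?thesis using conv by blast
qed

section \<open>Adjoints and the algebra S_E\<close>

lemma adj_sym: "is_adjoint y x \<Longrightarrow> is_adjoint x y"
  unfolding is_adjoint_def by (metis cinner_commute)

lemma adj_add: "is_adjoint y x \<Longrightarrow> is_adjoint y' x' \<Longrightarrow> is_adjoint (opadd y y') (opadd x x')"
  unfolding is_adjoint_def opadd_def by (simp add: cinner_add_left cinner_add_right)

lemma adj_scale: "is_adjoint y x \<Longrightarrow> is_adjoint (opscale (cnj c) y) (opscale c x)"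
  unfolding is_adjoint_def opscale_def by (simp add: cinner_scaleC_left cinner_scaleC_right)

lemma adj_comp: "is_adjoint y x \<Longrightarrow> is_adjoint y' x' \<Longrightarrow> is_adjoint (y' \<circ> y) (x \<circ> x')"
  unfolding is_adjoint_def by simp

lemma adj_sub: "is_adjoint y x \<Longrightarrow> is_adjoint y' x' \<Longrightarrow> is_adjoint (opsub y y') (opsub x x')"
  unfolding is_adjoint_def opsub_def by (simp add: cinner_diff_left cinner_diff_right)

lemma adj_norm:
  assumes adj: "is_adjoint y x" and x: "x \<in> KH" and y: "y \<in> KH"
  shows "onorm y \<le> onorm x"
proof (rule onorm_bound)
  show "0 \<le> onorm x" using x by (rule onorm_KH_nonneg)
  fix v
  have "(norm (y v))\<^sup>2 = Re (cinner (y v) (y v))" by (rule norm_sq_cinner)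
  also have "cinner (y v) (y v) = cinner (x (y v)) v" using adj by (simp add: is_adjoint_def)
  also have "Re (cinner (x (y v)) v) \<le> norm (x (y v)) * norm v"
    using cauchy_schwarz[of "x (y v)" v] complex_Re_le_cmod order_trans by blast
  also have "\<dots> \<le> onorm x * norm (y v) * norm v"
    using KH_onorm[OF x, of "y v"] by (simp add: mult_right_mono)
  finally have "norm (y v) * norm (y v) \<le> (onorm x * norm v) * norm (y v)"
    by (simp add: power2_eq_square algebra_simps)
  then show "norm (y v) \<le> onorm x * norm v"
    by (cases "y v = 0") (auto simp: onorm_KH_nonneg x)
qed

definition eigv :: "('a::complex_vector \<Rightarrow> 'a) \<Rightarrow> 'a \<Rightarrow> bool" where
  "eigv x e \<longleftrightarrow> (\<exists>c. x e = c *\<^sub>C e)"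

lemma eigv_add: "eigv x e \<Longrightarrow> eigv y e \<Longrightarrow> eigv (opadd x y) e"
  unfolding eigv_def opadd_def by (metis scaleC_add_left)

lemma eigv_scale: "eigv x e \<Longrightarrow> eigv (opscale c x) e"
  unfolding eigv_def opscale_def by (metis scaleC_scaleC)

lemma eigv_comp: "clinear x \<Longrightarrow> eigv x e \<Longrightarrow> eigv y e \<Longrightarrow> eigv (x \<circ> y) e"
  unfolding eigv_def by (metis clinear_scaleC comp_apply scaleC_scaleC)

definition SE :: "'a::chilbert_space set \<Rightarrow> ('a \<Rightarrow> 'a) set" where
  "SE E = {x. x \<in> KH \<and> (\<forall>e\<in>E. eigv x e) \<and> (\<exists>y\<in>KH. is_adjoint y x \<and> (\<forall>e\<in>E. eigv y e))}"

lemma SE_KH: "x \<in> SE E \<Longrightarrow> x \<in> KH"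
  by (simp add: SE_def)

lemma SE_add: "x \<in> SE E \<Longrightarrow> y \<in> SE E \<Longrightarrow> opadd x y \<in> SE E"
  unfolding SE_def by (auto intro!: KH_add eigv_add adj_add bexI[where x="opadd _ _"])

lemma SE_scale: "x \<in> SE E \<Longrightarrow> opscale c x \<in> SE E"
  unfolding SE_def by (auto intro!: KH_scale eigv_scale adj_scale bexI[where x="opscale (cnj c) _"])

lemma SE_comp: "x \<in> SE E \<Longrightarrow> y \<in> SE E \<Longrightarrow> x \<circ> y \<in> SE E"
  unfolding SE_def by (auto intro!: KH_comp2 eigv_comp adj_comp KH_cl bexI[where x="_ \<circ> _"])

lemma SE_sub: "x \<in> SE E \<Longrightarrow> y \<in> SE E \<Longrightarrow> opsub x y \<in> SE E"
  by (simp add: opsub_eq SE_add SE_scale)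

lemma SE_adj: "x \<in> SE E \<Longrightarrow> \<exists>y\<in>SE E. is_adjoint y x"
  unfolding SE_def by (auto intro: adj_sym)

lemma SE_closed:
  assumes xs: "\<And>n. xs n \<in> SE E" and x: "x \<in> KH"
    and lim: "(\<lambda>n. onorm (opsub (xs n) x)) \<longlonglongrightarrow> 0"
  shows "x \<in> SE E"
proof -
  have xsK: "xs n \<in> KH" for n using xs by (simp add: SE_def)
  have pw: "(\<lambda>n. xs n v) \<longlonglongrightarrow> x v" for v by (rule conv_pointwise[OF xsK x lim])
  have eigx: "eigv x e" if "e \<in> E" for e
    using eig_limit[OF pw[of e]] xs that by (auto simp: SE_def eigv_def)
  have "\<forall>n. \<exists>y. y \<in> KH \<and> is_adjoint y (xs n) \<and> (\<forall>e\<in>E. eigv y e)"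
  proof
    fix n show "\<exists>y. y \<in> KH \<and> is_adjoint y (xs n) \<and> (\<forall>e\<in>E. eigv y e)"
      using xs[of n] unfolding SE_def by blast
  qed
  then obtain ys where ys: "\<And>n. ys n \<in> KH" "\<And>n. is_adjoint (ys n) (xs n)" "\<And>n e. e \<in> E \<Longrightarrow> eigv (ys n) e"
    by metis
  have "\<exists>y\<in>KH. (\<lambda>n. onorm (opsub (ys n) y)) \<longlonglongrightarrow> 0"
  proof (rule KH_complete[OF ys(1)])
    fix e :: real assume e: "e > 0"
    obtain N where N: "\<And>n. n \<ge> N \<Longrightarrow> norm (onorm (opsub (xs n) x) - 0) < e/2"
      using LIMSEQ_D[OF lim, of "e/2"] e by auto
    show "\<exists>N. \<forall>m\<ge>N. \<forall>n\<ge>N. onorm (opsub (ys m) (ys n)) < e"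
    proof (intro exI allI impI)
      fix m n assume mn: "N \<le> m" "N \<le> n"
      have "onorm (opsub (ys m) (ys n)) \<le> onorm (opsub (xs m) (xs n))"
        by (intro adj_norm adj_sub ys KH_sub xsK)
      also have "\<dots> \<le> onorm (opsub (xs m) x) + onorm (opsub x (xs n))"
        by (intro onorm_triangle_ops xsK x)
      also have "\<dots> < e/2 + e/2"
        using N[OF mn(1)] N[OF mn(2)] by (simp add: onorm_opsub_commute[of x])
      finally show "onorm (opsub (ys m) (ys n)) < e" by simp
    qed
  qed
  then obtain y where y: "y \<in> KH" "(\<lambda>n. onorm (opsub (ys n) y)) \<longlonglongrightarrow> 0" by blast
  have pwy: "(\<lambda>n. ys n v) \<longlonglongrightarrow> y v" for v by (rule conv_pointwise[OF ys(1) y])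
  have adj: "is_adjoint y x"
    unfolding is_adjoint_def
  proof (intro allI)
    fix u v
    have "(\<lambda>n. cinner (xs n u) v) \<longlonglongrightarrow> cinner (x u) v" by (intro tendsto_cinner_left pw)
    moreover have "(\<lambda>n. cinner (xs n u) v) \<longlonglongrightarrow> cinner u (y v)"
      using tendsto_cinner_right[OF pwy[of v], of u] ys(2) by (simp add: is_adjoint_def)
    ultimately show "cinner (x u) v = cinner u (y v)" using LIMSEQ_unique by blast
  qed
  have eigy: "eigv y e" if "e \<in> E" for e
    using eig_limit[OF pwy[of e]] ys(3)[OF that] by (auto simp: eigv_def)
  show ?thesis unfolding SE_def using x eigx y(1) adj eigy by blast
qed

lemma SE_cstar: "cstar_subalg (SE E)"
  unfolding cstar_subalg_def
proof (intro conjI)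
  show "SE E \<subseteq> KH" using SE_KH by blast
  show "\<forall>x\<in>SE E. \<forall>y\<in>SE E. opadd x y \<in> SE E \<and> x \<circ> y \<in> SE E" by (simp add: SE_add SE_comp)
  show "\<forall>c. \<forall>x\<in>SE E. opscale c x \<in> SE E" by (simp add: SE_scale)
  show "\<forall>x\<in>SE E. \<exists>y\<in>SE E. is_adjoint y x" by (simp add: SE_adj)
  show "\<forall>xs x. (\<forall>n. xs n \<in> SE E) \<and> x \<in> KH \<and> (\<lambda>n. onorm (opsub (xs n) x)) \<longlonglongrightarrow> 0 \<longrightarrow> x \<in> SE E"
    using SE_closed by blast
qed

lemma cstar_gen_SE: "G \<subseteq> SE E \<Longrightarrow> cstar_gen G \<subseteq> SE E"
  unfolding cstar_gen_def using SE_cstar by blast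

section \<open>Weak-2-local derivations on S_E\<close>

lemma dual_fun:
  fixes u w :: "'a::chilbert_space"
  shows "(\<lambda>z. cinner w (z u)) \<in> dual_KH"
  unfolding dual_KH_def
proof (intro CollectI conjI ballI allI)
  show "cinner w (opadd x y u) = cinner w (x u) + cinner w (y u)" for x y
    by (simp add: opadd_def cinner_add_right)
  show "cinner w (opscale c x u) = c * cinner w (x u)" for c x
    by (simp add: opscale_def cinner_scaleC_right)
  show "\<exists>M. \<forall>x\<in>(KH::('a \<Rightarrow> 'a) set). cmod (cinner w (x u)) \<le> M * onorm x"
  proof (intro exI ballI)
    fix x :: "'a \<Rightarrow> 'a" assume x: "x \<in> KH"
    have "cmod (cinner w (x u)) \<le> norm w * norm (x u)" by (rule cauchy_schwarz)
    also have "\<dots> \<le> norm w * (onorm x * norm u)" using KH_onorm[OF x] by (simp add: mult_left_mono)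
    finally show "cmod (cinner w (x u)) \<le> norm w * norm u * onorm x" by (simp add: algebra_simps)
  qed
qed

definition ev :: "('a::complex_inner \<Rightarrow> 'a) \<Rightarrow> 'a \<Rightarrow> complex" where
  "ev x u = cinner u (x u) / cinner u u"

lemma ev_opadd: "ev (opadd x y) u = ev x u + ev y u"
  by (simp add: ev_def opadd_def cinner_add_right add_divide_distrib)

lemma ev_opscale: "ev (opscale c x) u = c * ev x u"
  by (simp add: ev_def opscale_def cinner_scaleC_right)

lemma ev_adj:
  assumes "is_adjoint xs x" "eigv xs w"
  shows "cinner w (x v) = ev x w * cinner w v"
proof (cases "w = 0")
  case True then show ?thesis by simp
next
  case False
  obtain b where b: "xs w = b *\<^sub>C w" using assms(2) by (auto simp: eigv_def)
  have gen: "cinner w (x v) = cnj b * cinner w v" for v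
  proof -
    have "cinner w (x v) = cnj (cinner (x v) w)" by (rule cinner_commute)
    also have "\<dots> = cnj (cinner v (xs w))" using assms(1) by (simp add: is_adjoint_def)
    also have "\<dots> = cnj b * cinner w v" by (simp add: b cinner_scaleC_right cinner_commute[of v w])
    finally show ?thesis .
  qed
  have "ev x w = cnj b" using gen[of w] False by (simp add: ev_def)
  then show ?thesis using gen by simp
qed

lemma ev_eig:
  assumes "clinear x" "eigv x u"
  shows "x u = ev x u *\<^sub>C u"
proof (cases "u = 0")
  case True then show ?thesis using assms by (simp add: clinear_0)
next
  case False
  obtain a where a: "x u = a *\<^sub>C u" using assms(2) by (auto simp: eigv_def)
  then have "ev x u = a" using False by (simp add: ev_def cinner_scaleC_right)
  then show ?thesis using a by simp
qed

lemma eigv_scaleR: "clinear x \<Longrightarrow> eigv x e \<Longrightarrow> eigv x (r *\<^sub>R e)"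
  unfolding eigv_def by (metis clinear_scaleR scaleC_of_real scaleC_scaleC mult.commute)

definition proj1 :: "'a::complex_inner \<Rightarrow> 'a \<Rightarrow> 'a" where
  "proj1 u = (\<lambda>z. cinner u z *\<^sub>C u)"

lemma proj1_KH: "proj1 u \<in> KH"
  unfolding proj1_def by (rule KH_rank1)

lemma key:
  fixes \<Delta> :: "('a::chilbert_space \<Rightarrow> 'a) \<Rightarrow> ('a \<Rightarrow> 'a)"
  assumes W: "weak_2_local_derivation \<Delta>" and x: "x \<in> KH" and eu: "eigv x u" and nu: "norm u = 1"
    and adj: "is_adjoint xs x" and ew: "eigv xs w"
  shows "cinner w (\<Delta> x u) = (ev x u - ev x w) * cinner w (\<Delta> (proj1 u) u)"
proof -
  let ?p = "proj1 u"
  let ?\<phi> = "\<lambda>z. cinner w (z u)"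
  have all: "\<forall>a\<in>KH. \<forall>b\<in>KH. \<forall>\<phi>\<in>dual_KH. \<exists>D. derivation_KH D \<and> \<phi> (\<Delta> a) = \<phi> (D a) \<and> \<phi> (\<Delta> b) = \<phi> (D b)"
    using W by (simp add: weak_2_local_derivation_def)
  have "\<exists>D. derivation_KH D \<and> ?\<phi> (\<Delta> x) = ?\<phi> (D x) \<and> ?\<phi> (\<Delta> ?p) = ?\<phi> (D ?p)"
    using bspec[OF bspec[OF bspec[OF all x] proj1_KH[of u]] dual_fun[of w u]] by simp
  then obtain D where D: "derivation_KH D" "?\<phi> (\<Delta> x) = ?\<phi> (D x)" "?\<phi> (\<Delta> ?p) = ?\<phi> (D ?p)"
    by blast
  have Dl: "D (x \<circ> ?p) = opadd (D x \<circ> ?p) (x \<circ> D ?p)" and Ds: "D (opscale (ev x u) ?p) = opscale (ev x u) (D ?p)"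
    using D(1) x proj1_KH unfolding derivation_KH_def derivation_into_KH_def lin_on_def by blast+
  have xu: "x u = ev x u *\<^sub>C u" by (rule ev_eig[OF KH_cl[OF x] eu])
  have "x \<circ> ?p = opscale (ev x u) ?p"
    by (auto simp: fun_eq_iff proj1_def opscale_def clinear_scaleC[OF KH_cl[OF x]] xu scaleC_scaleC mult.commute)
  then have eq: "opadd (D x \<circ> ?p) (x \<circ> D ?p) = opscale (ev x u) (D ?p)" using Dl Ds by simp
  have pu: "?p u = u"
  proof -
    have "cinner u u = 1" using nu by (simp add: cinner_self_eq)
    then show ?thesis by (simp add: proj1_def scaleC_one)
  qed
  from fun_cong[OF eq, of u] have "D x u + x (D ?p u) = ev x u *\<^sub>C D ?p u"
    by (simp add: opadd_def opscale_def pu)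
  then have "cinner w (D x u) + cinner w (x (D ?p u)) = ev x u * cinner w (D ?p u)"
    by (metis cinner_add_right cinner_scaleC_right)
  then have "cinner w (D x u) = (ev x u - ev x w) * cinner w (D ?p u)"
    using ev_adj[OF adj ew, of "D ?p u"] by (simp add: algebra_simps)
  then show ?thesis using D(2,3) by simp
qed

lemma zero_by_unit:
  fixes E :: "'a::chilbert_space set"
  assumes perp: "\<And>z. (\<forall>e\<in>E. cinner e z = 0) \<Longrightarrow> z = 0"
    and T: "T \<in> KH"
    and van: "\<And>e r w. e \<in> E \<Longrightarrow> norm (r *\<^sub>R e) = 1 \<Longrightarrow> w \<in> E \<Longrightarrow> cinner w (T (r *\<^sub>R e)) = 0"
  shows "T = (\<lambda>_. 0)"
proof (rule vanish_on_E[OF perp KH_cl[OF T] KH_bl[OF T]])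
  fix e assume e: "e \<in> E"
  show "T e = 0"
  proof (cases "e = 0")
    case True then show ?thesis using KH_cl[OF T] by (simp add: clinear_0)
  next
    case False
    define r where "r = 1 / norm e"
    have n1: "norm (r *\<^sub>R e) = 1" using False by (simp add: r_def)
    have "T (r *\<^sub>R e) = 0" by (rule perp) (use van[OF e n1] in blast)
    then have "r *\<^sub>R T e = 0" by (simp add: clinear_scaleR[OF KH_cl[OF T]])
    then show ?thesis using False by (simp add: r_def)
  qed
qed

lemma opsub_zero_eq: "opsub A B = (\<lambda>_. 0) \<Longrightarrow> A = B"
  by (simp add: opsub_def fun_eq_iff)

lemma opadd_apply: "opadd x y v = x v + y v"
  by (simp add: opadd_def)

lemma opscale_apply: "opscale c x v = c *\<^sub>C x v"
  by (simp add: opscale_def)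

lemma W_KH: "weak_2_local_derivation \<Delta> \<Longrightarrow> x \<in> KH \<Longrightarrow> \<Delta> x \<in> KH"
  by (simp add: weak_2_local_derivation_def)

lemma SE_adjE:
  assumes "x \<in> SE E"
  obtains xs where "xs \<in> KH" "is_adjoint xs x" "\<And>e. e \<in> E \<Longrightarrow> eigv xs e"
proof -
  from assms obtain xs where "xs \<in> KH" "is_adjoint xs x" "\<forall>e\<in>E. eigv xs e"
    unfolding SE_def by blast
  then show thesis using that by blast
qed

lemma SE_eigv: "x \<in> SE E \<Longrightarrow> e \<in> E \<Longrightarrow> eigv x (r *\<^sub>R e)"
  by (intro eigv_scaleR) (auto simp: SE_def KH_cl)

lemma ev_of_eig: "u \<noteq> 0 \<Longrightarrow> z u = k *\<^sub>C u \<Longrightarrow> ev z u = k"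
  by (simp add: ev_def cinner_scaleC_right)

context
  fixes \<Delta> :: "('a::chilbert_space \<Rightarrow> 'a) \<Rightarrow> ('a \<Rightarrow> 'a)" and E :: "'a set"
  assumes W: "weak_2_local_derivation \<Delta>"
    and perp: "\<And>z. (\<forall>e\<in>E. cinner e z = 0) \<Longrightarrow> z = 0"
begin

lemma SE_add_D: assumes x: "x \<in> SE E" and y: "y \<in> SE E"
  shows "\<Delta> (opadd x y) = opadd (\<Delta> x) (\<Delta> y)"
proof (rule opsub_zero_eq, rule zero_by_unit[OF perp])
  have xK: "x \<in> KH" and yK: "y \<in> KH" using x y by (simp_all add: SE_KH)
  show "opsub (\<Delta> (opadd x y)) (opadd (\<Delta> x) (\<Delta> y)) \<in> KH"
    by (intro KH_sub KH_add W_KH[OF W] xK yK)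
  fix e r w assume e: "e \<in> E" and n1: "norm (r *\<^sub>R e) = 1" and w: "w \<in> E"
  let ?u = "r *\<^sub>R e"
  obtain xs where xs: "xs \<in> KH" "is_adjoint xs x" "\<forall>e'\<in>E. eigv xs e'" using x unfolding SE_def by blast
  obtain ys where ys: "ys \<in> KH" "is_adjoint ys y" "\<forall>e'\<in>E. eigv ys e'" using y unfolding SE_def by blast
  let ?c = "cinner w (\<Delta> (proj1 ?u) ?u)"
  have kx: "cinner w (\<Delta> x ?u) = (ev x ?u - ev x w) * ?c"
    by (rule key[OF W xK SE_eigv[OF x e] n1 xs(2) bspec[OF xs(3) w]])
  have ky: "cinner w (\<Delta> y ?u) = (ev y ?u - ev y w) * ?c"
    by (rule key[OF W yK SE_eigv[OF y e] n1 ys(2) bspec[OF ys(3) w]])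
  have kxy: "cinner w (\<Delta> (opadd x y) ?u) = (ev (opadd x y) ?u - ev (opadd x y) w) * ?c"
    by (rule key[OF W KH_add[OF xK yK] SE_eigv[OF SE_add[OF x y] e] n1 adj_add[OF xs(2) ys(2)]
          eigv_add[OF bspec[OF xs(3) w] bspec[OF ys(3) w]]])
  show "cinner w (opsub (\<Delta> (opadd x y)) (opadd (\<Delta> x) (\<Delta> y)) ?u) = 0"
    by (simp add: opsub_apply opadd_apply cinner_diff_right cinner_add_right kx ky kxy ev_opadd algebra_simps)
qed

lemma SE_scale_D: assumes x: "x \<in> SE E"
  shows "\<Delta> (opscale c x) = opscale c (\<Delta> x)"
proof (rule opsub_zero_eq, rule zero_by_unit[OF perp])
  have xK: "x \<in> KH" using x by (simp add: SE_KH)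
  show "opsub (\<Delta> (opscale c x)) (opscale c (\<Delta> x)) \<in> KH"
    by (intro KH_sub KH_scale W_KH[OF W] xK)
  fix e r w assume e: "e \<in> E" and n1: "norm (r *\<^sub>R e) = 1" and w: "w \<in> E"
  let ?u = "r *\<^sub>R e"
  obtain xs where xs: "xs \<in> KH" "is_adjoint xs x" "\<forall>e'\<in>E. eigv xs e'" using x unfolding SE_def by blast
  let ?c = "cinner w (\<Delta> (proj1 ?u) ?u)"
  have kx: "cinner w (\<Delta> x ?u) = (ev x ?u - ev x w) * ?c"
    by (rule key[OF W xK SE_eigv[OF x e] n1 xs(2) bspec[OF xs(3) w]])
  have kcx: "cinner w (\<Delta> (opscale c x) ?u) = (ev (opscale c x) ?u - ev (opscale c x) w) * ?c"
    by (rule key[OF W KH_scale[OF xK] SE_eigv[OF SE_scale[OF x] e] n1 adj_scale[OF xs(2)]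
          eigv_scale[OF bspec[OF xs(3) w]]])
  show "cinner w (opsub (\<Delta> (opscale c x)) (opscale c (\<Delta> x)) ?u) = 0"
    by (simp add: opsub_apply opscale_apply cinner_diff_right cinner_scaleC_right kx kcx ev_opscale algebra_simps)
qed

lemma SE_comp_D: assumes x: "x \<in> SE E" and y: "y \<in> SE E"
  shows "\<Delta> (x \<circ> y) = opadd (\<Delta> x \<circ> y) (x \<circ> \<Delta> y)"
proof (rule opsub_zero_eq, rule zero_by_unit[OF perp])
  have xK: "x \<in> KH" and yK: "y \<in> KH" using x y by (simp_all add: SE_KH)
  show "opsub (\<Delta> (x \<circ> y)) (opadd (\<Delta> x \<circ> y) (x \<circ> \<Delta> y)) \<in> KH"
    by (intro KH_sub KH_add KH_comp2 W_KH[OF W] xK yK KH_comp2)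
  fix e r w assume e: "e \<in> E" and n1: "norm (r *\<^sub>R e) = 1" and w: "w \<in> E"
  let ?u = "r *\<^sub>R e"
  have u0: "?u \<noteq> 0" using n1 by auto
  obtain xs where xs: "xs \<in> KH" "is_adjoint xs x" "\<forall>e'\<in>E. eigv xs e'" using x unfolding SE_def by blast
  obtain ys where ys: "ys \<in> KH" "is_adjoint ys y" "\<forall>e'\<in>E. eigv ys e'" using y unfolding SE_def by blast
  let ?c = "cinner w (\<Delta> (proj1 ?u) ?u)"
  have kx: "cinner w (\<Delta> x ?u) = (ev x ?u - ev x w) * ?c"
    by (rule key[OF W xK SE_eigv[OF x e] n1 xs(2) bspec[OF xs(3) w]])
  have ky: "cinner w (\<Delta> y ?u) = (ev y ?u - ev y w) * ?c"
    by (rule key[OF W yK SE_eigv[OF y e] n1 ys(2) bspec[OF ys(3) w]])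
  have kxy: "cinner w (\<Delta> (x \<circ> y) ?u) = (ev (x \<circ> y) ?u - ev (x \<circ> y) w) * ?c"
    by (rule key[OF W KH_comp2[OF xK yK] SE_eigv[OF SE_comp[OF x y] e] n1 adj_comp[OF xs(2) ys(2)]
          eigv_comp[OF KH_cl[OF ys(1)] bspec[OF ys(3) w] bspec[OF xs(3) w]]])
  have yu: "y ?u = ev y ?u *\<^sub>C ?u" by (rule ev_eig[OF KH_cl[OF yK] SE_eigv[OF y e]])
  have xu: "x ?u = ev x ?u *\<^sub>C ?u" by (rule ev_eig[OF KH_cl[OF xK] SE_eigv[OF x e]])
  have evu: "ev (x \<circ> y) ?u = ev x ?u * ev y ?u"
  proof (rule ev_of_eig[OF u0])
    show "(x \<circ> y) ?u = (ev x ?u * ev y ?u) *\<^sub>C ?u"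
      using yu xu by (simp add: clinear_scaleC[OF KH_cl[OF xK]] scaleC_scaleC mult.commute)
  qed
  have evw: "ev (x \<circ> y) w = ev x w * ev y w"
    using ev_adj[OF xs(2) bspec[OF xs(3) w], of "y w"] by (simp add: ev_def)
  have t1: "cinner w ((\<Delta> x \<circ> y) ?u) = ev y ?u * cinner w (\<Delta> x ?u)"
    using yu by (simp add: clinear_scaleC[OF KH_cl[OF W_KH[OF W xK]]] cinner_scaleC_right)
  have t2: "cinner w ((x \<circ> \<Delta> y) ?u) = ev x w * cinner w (\<Delta> y ?u)"
    using ev_adj[OF xs(2) bspec[OF xs(3) w]] by simp
  show "cinner w (opsub (\<Delta> (x \<circ> y)) (opadd (\<Delta> x \<circ> y) (x \<circ> \<Delta> y)) ?u) = 0"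
    unfolding opsub_apply opadd_apply cinner_diff_right cinner_add_right t1 t2
    by (simp add: kx ky kxy evu evw algebra_simps)
qed

lemma SE_sub_D: assumes x: "x \<in> SE E" and y: "y \<in> SE E"
  shows "\<Delta> (opsub x y) = opsub (\<Delta> x) (\<Delta> y)"
  by (simp add: opsub_eq SE_add_D SE_scale_D SE_scale x y)

end

lemma ev_bound: assumes "z \<in> KH" shows "cmod (ev z v) \<le> onorm z"
proof (cases "v = 0")
  case True then show ?thesis using onorm_KH_nonneg[OF assms] by (simp add: ev_def)
next
  case False
  have "cmod (cinner v (z v)) \<le> norm v * norm (z v)" by (rule cauchy_schwarz)
  also have "\<dots> \<le> norm v * (onorm z * norm v)" using KH_onorm[OF assms] by (simp add: mult_left_mono)
  finally have a: "cmod (cinner v (z v)) \<le> onorm z * (norm v)\<^sup>2" by (simp add: power2_eq_square algebra_simps)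
  have "cmod (ev z v) = cmod (cinner v (z v)) / (norm v)\<^sup>2"
    by (simp add: ev_def cinner_self_eq norm_divide norm_power)
  also have "\<dots> \<le> onorm z" using a False by (simp add: divide_le_eq)
  finally show ?thesis .
qed

lemma closed_conv:
  fixes f :: "nat \<Rightarrow> 'a::real_normed_vector \<Rightarrow> complex" and g :: "'a \<Rightarrow> complex"
  assumes fL: "\<And>n x y. cmod (f n x - f n y) \<le> K * norm (x - y)"
    and gL: "\<And>x y. cmod (g x - g y) \<le> K * norm (x - y)"
  shows "closed {x. (\<lambda>n. f n x) \<longlonglongrightarrow> g x}"
  unfolding closed_sequential_limits
proof (intro allI impI, elim conjE)
  fix s l assume s: "\<forall>n. s n \<in> {x. (\<lambda>n. f n x) \<longlonglongrightarrow> g x}" and sl: "s \<longlonglongrightarrow> l"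
  show "l \<in> {x. (\<lambda>n. f n x) \<longlonglongrightarrow> g x}"
  proof (simp, rule LIMSEQ_I)
    fix r :: real assume r: "r > 0"
    define \<delta> where "\<delta> = r / (3 * (\<bar>K\<bar> + 1))"
    have \<delta>: "\<delta> > 0" using r by (simp add: \<delta>_def add_nonneg_pos)
    have K\<delta>: "\<bar>K\<bar> * \<delta> < r / 3"
    proof -
      have "\<bar>K\<bar> * \<delta> < (\<bar>K\<bar> + 1) * \<delta>" using \<delta> by simp
      also have "\<dots> = r / 3"
      proof -
        have pK: "\<bar>K\<bar> + 1 > 0" by (simp add: add_nonneg_pos)
        then show ?thesis by (auto simp: \<delta>_def field_simps)
      qed
      finally show ?thesis .
    qed
    obtain j where j: "norm (s j - l) < \<delta>" using LIMSEQ_D[OF sl \<delta>] by auto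
    have "(\<lambda>n. f n (s j)) \<longlonglongrightarrow> g (s j)" using s by simp
    then obtain N where N: "\<And>n. n \<ge> N \<Longrightarrow> norm (f n (s j) - g (s j)) < r/3"
      using LIMSEQ_D[of "\<lambda>n. f n (s j)" "g (s j)" "r/3"] r by auto
    show "\<exists>no. \<forall>n\<ge>no. norm (f n l - g l) < r"
    proof (intro exI allI impI)
      fix n assume n: "N \<le> n"
      have b1: "cmod (f n l - f n (s j)) \<le> \<bar>K\<bar> * \<delta>"
      proof -
        have "cmod (f n l - f n (s j)) \<le> K * norm (l - s j)" by (rule fL)
        also have "\<dots> \<le> \<bar>K\<bar> * norm (l - s j)" by (simp add: mult_right_mono)
        also have "\<dots> \<le> \<bar>K\<bar> * \<delta>" using j by (simp add: mult_left_mono norm_minus_commute)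
        finally show ?thesis .
      qed
      have b3: "cmod (g (s j) - g l) \<le> \<bar>K\<bar> * \<delta>"
      proof -
        have "cmod (g (s j) - g l) \<le> K * norm (s j - l)" by (rule gL)
        also have "\<dots> \<le> \<bar>K\<bar> * norm (s j - l)" by (simp add: mult_right_mono)
        also have "\<dots> \<le> \<bar>K\<bar> * \<delta>" using j by (simp add: mult_left_mono)
        finally show ?thesis .
      qed
      have "f n l - g l = ((f n l - f n (s j)) + (f n (s j) - g (s j))) + (g (s j) - g l)" by simp
      then have "cmod (f n l - g l) \<le> cmod ((f n l - f n (s j)) + (f n (s j) - g (s j))) + cmod (g (s j) - g l)"
        by (metis norm_triangle_ineq)
      also have "\<dots> \<le> cmod (f n l - f n (s j)) + cmod (f n (s j) - g (s j)) + cmod (g (s j) - g l)"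
        by (intro add_right_mono norm_triangle_ineq)
      finally have "cmod (f n l - g l) \<le> cmod (f n l - f n (s j)) + cmod (f n (s j) - g (s j)) + cmod (g (s j) - g l)" .
      then show "norm (f n l - g l) < r" using b1 b3 N[OF n] K\<delta> by simp
    qed
  qed
qed

definition dop :: "('a::chilbert_space \<Rightarrow> 'a) \<Rightarrow> ('a \<Rightarrow> 'a) \<Rightarrow> real" where
  "dop x y = \<bar>onorm (opsub x y)\<bar>"

lemma dop_KH: "x \<in> KH \<Longrightarrow> y \<in> KH \<Longrightarrow> dop x y = onorm (opsub x y)"
  by (simp add: dop_def onorm_KH_nonneg KH_sub)

lemma Metric_space_SE: "Metric_space (SE E) dop"
proof
  show "0 \<le> dop x y" for x y by (simp add: dop_def)
  show "dop x y = dop y x" for x y by (simp add: dop_def onorm_opsub_commute)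
  show "dop x y = 0 \<longleftrightarrow> x = y" if "x \<in> SE E" "y \<in> SE E" for x y
  proof -
    have "bounded_linear (opsub x y)" using that by (simp add: KH_bl KH_sub SE_KH)
    then have "onorm (opsub x y) = 0 \<longleftrightarrow> (\<forall>v. x v - y v = 0)" by (simp add: onorm_eq_0 opsub_apply)
    then show ?thesis by (auto simp: dop_def fun_eq_iff)
  qed
  show "dop x z \<le> dop x y + dop y z" if "x \<in> SE E" "y \<in> SE E" "z \<in> SE E" for x y z
    using that by (simp add: dop_KH SE_KH onorm_triangle_ops)
qed

context
  fixes \<Delta> :: "('a::chilbert_space \<Rightarrow> 'a) \<Rightarrow> ('a \<Rightarrow> 'a)" and E :: "'a set"
  assumes W: "weak_2_local_derivation \<Delta>"
    and perp: "\<And>z. (\<forall>e\<in>E. cinner e z = 0) \<Longrightarrow> z = 0"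
begin

lemma weak_E:
  assumes \<sigma>: "\<And>n. \<sigma> n \<in> SE E" and l: "l \<in> SE E"
    and lim: "(\<lambda>n. onorm (opsub (\<sigma> n) l)) \<longlonglongrightarrow> 0"
    and e: "e \<in> E" and w: "w \<in> E"
  shows "(\<lambda>n. cinner w (\<Delta> (\<sigma> n) e)) \<longlonglongrightarrow> cinner w (\<Delta> l e)"
proof (cases "e = 0")
  case True
  have z: "\<Delta> x 0 = 0" if "x \<in> SE E" for x using KH_cl[OF W_KH[OF W SE_KH[OF that]]] by (simp add: clinear_0)
  have "(\<lambda>n. cinner w (\<Delta> (\<sigma> n) e)) = (\<lambda>n. 0)" using True z[OF \<sigma>] by simp
  moreover have "cinner w (\<Delta> l e) = 0" using True z[OF l] by simp
  ultimately show ?thesis by simp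
next
  case False
  define r where "r = 1 / norm e"
  let ?u = "r *\<^sub>R e"
  have n1: "norm ?u = 1" using False by (simp add: r_def)
  let ?c = "cinner w (\<Delta> (proj1 ?u) ?u)"
  define z where "z n = opsub (\<sigma> n) l" for n
  have zS: "z n \<in> SE E" for n by (simp add: z_def SE_sub \<sigma> l)
  have diff: "cinner w (\<Delta> (\<sigma> n) ?u) - cinner w (\<Delta> l ?u) = cinner w (\<Delta> (z n) ?u)" for n
    using SE_sub_D[OF W perp \<sigma> l] by (simp add: z_def opsub_apply cinner_diff_right)
  have kz: "cinner w (\<Delta> (z n) ?u) = (ev (z n) ?u - ev (z n) w) * ?c" for n
  proof -
    obtain zs where zs: "zs \<in> KH" "is_adjoint zs (z n)" "\<forall>e'\<in>E. eigv zs e'"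
      using zS[of n] unfolding SE_def by blast
    show ?thesis by (rule key[OF W SE_KH[OF zS] SE_eigv[OF zS e] n1 zs(2) bspec[OF zs(3) w]])
  qed
  have "(\<lambda>n. cinner w (\<Delta> (\<sigma> n) ?u) - cinner w (\<Delta> l ?u)) \<longlonglongrightarrow> 0"
  proof (rule Lim_null_comparison)
    show "\<forall>\<^sub>F n in sequentially. norm (cinner w (\<Delta> (\<sigma> n) ?u) - cinner w (\<Delta> l ?u)) \<le> 2 * onorm (z n) * cmod ?c"
    proof (rule always_eventually, rule allI)
      fix n
      have "cmod (ev (z n) ?u - ev (z n) w) \<le> cmod (ev (z n) ?u) + cmod (ev (z n) w)" by (rule norm_triangle_ineq4)
      also have "\<dots> \<le> 2 * onorm (z n)"
        using ev_bound[OF SE_KH[OF zS], of n ?u] ev_bound[OF SE_KH[OF zS], of n w] by linarith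
      finally have "cmod (ev (z n) ?u - ev (z n) w) * cmod ?c \<le> 2 * onorm (z n) * cmod ?c"
        by (simp add: mult_right_mono)
      then show "norm (cinner w (\<Delta> (\<sigma> n) ?u) - cinner w (\<Delta> l ?u)) \<le> 2 * onorm (z n) * cmod ?c"
        by (simp add: diff kz norm_mult)
    qed
    show "(\<lambda>n. 2 * onorm (z n) * cmod ?c) \<longlonglongrightarrow> 0"
      using tendsto_mult[OF tendsto_mult[OF tendsto_const lim] tendsto_const, of 2 "cmod ?c"] by (simp add: z_def)
  qed
  then have "(\<lambda>n. (cinner w (\<Delta> (\<sigma> n) ?u) - cinner w (\<Delta> l ?u)) + cinner w (\<Delta> l ?u)) \<longlonglongrightarrow> 0 + cinner w (\<Delta> l ?u)"
    by (intro tendsto_add tendsto_const)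
  then have cu: "(\<lambda>n. cinner w (\<Delta> (\<sigma> n) ?u)) \<longlonglongrightarrow> cinner w (\<Delta> l ?u)" by simp
  have sc: "cinner w (\<Delta> x e) = complex_of_real (norm e) * cinner w (\<Delta> x ?u)" if "x \<in> KH" for x
  proof -
    have "e = norm e *\<^sub>R ?u" using False by (simp add: r_def)
    then have "\<Delta> x e = norm e *\<^sub>R \<Delta> x ?u" by (metis clinear_scaleR[OF KH_cl[OF W_KH[OF W that]]])
    then show ?thesis by (simp add: cinner_scaleR_right)
  qed
  have e1: "(\<lambda>n. cinner w (\<Delta> (\<sigma> n) e)) = (\<lambda>n. complex_of_real (norm e) * cinner w (\<Delta> (\<sigma> n) ?u))"
    using sc[OF SE_KH[OF \<sigma>]] by auto
  have e2: "cinner w (\<Delta> l e) = complex_of_real (norm e) * cinner w (\<Delta> l ?u)"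
    using sc[OF SE_KH[OF l]] by auto
  show ?thesis unfolding e1 e2 by (rule tendsto_mult[OF tendsto_const cu])
qed

lemma Fk_closed:
  assumes \<sigma>: "\<And>n. \<sigma> n \<in> SE E" and l: "l \<in> SE E"
    and lim: "(\<lambda>n. onorm (opsub (\<sigma> n) l)) \<longlonglongrightarrow> 0"
    and bnd: "\<And>n. onorm (\<Delta> (\<sigma> n)) \<le> k"
  shows "onorm (\<Delta> l) \<le> k"
proof -
  define A where "A n = \<Delta> (\<sigma> n)" for n
  define A0 where "A0 = \<Delta> l"
  have AK: "A n \<in> KH" for n unfolding A_def by (rule W_KH[OF W SE_KH[OF \<sigma>]])
  have A0K: "A0 \<in> KH" unfolding A0_def by (rule W_KH[OF W SE_KH[OF l]])
  have k0: "0 \<le> k" using bnd[of 0] onorm_KH_nonneg[OF AK[of 0]] by (simp add: A_def)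
  have An: "norm (A n v) \<le> k * norm v" for n v
    using KH_onorm[OF AK, of n v] bnd[of n] by (simp add: A_def mult_right_mono order_trans)
  have A0n: "norm (A0 v) \<le> onorm A0 * norm v" for v using KH_onorm[OF A0K] .
  define K where "K = k + onorm A0"
  have K0: "0 \<le> K" using k0 onorm_KH_nonneg[OF A0K] by (simp add: K_def)
  have Kk: "k * t \<le> K * t" if "0 \<le> t" for t
    using that onorm_KH_nonneg[OF A0K] by (intro mult_right_mono) (auto simp: K_def)
  have KA: "onorm A0 * t \<le> K * t" if "0 \<le> t" for t
    using that k0 by (intro mult_right_mono) (auto simp: K_def)
  have Kk': "a \<le> k * t \<Longrightarrow> 0 \<le> t \<Longrightarrow> a \<le> K * t" for a t using Kk by (meson order_trans)
  have KA': "a \<le> onorm A0 * t \<Longrightarrow> 0 \<le> t \<Longrightarrow> a \<le> K * t" for a t using KA by (meson order_trans)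
  have clA: "clinear (A n)" for n using AK KH_cl by blast
  have clA0: "clinear A0" using A0K KH_cl by blast
  have step2: "(\<lambda>n. cinner w (A n e)) \<longlonglongrightarrow> cinner w (A0 e)" if e: "e \<in> E" for e w
  proof -
    let ?N = "{w. (\<lambda>n. cinner w (A n e)) \<longlonglongrightarrow> cinner w (A0 e)}"
    have "?N = UNIV"
    proof (rule perp_dense[OF perp])
      show "csubspace ?N"
        unfolding csubspace_def
      proof (intro conjI ballI allI)
        show "0 \<in> ?N" by simp
        fix x y assume "x \<in> ?N" "y \<in> ?N"
        then show "x + y \<in> ?N" using tendsto_add by (fastforce simp: cinner_add_left)
      next
        fix c x assume "x \<in> ?N"
        then show "c *\<^sub>C x \<in> ?N" using tendsto_mult[OF tendsto_const] by (fastforce simp: cinner_scaleC_left)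
      qed
      show "closed ?N"
      proof (rule closed_conv[where K="K * norm e"])
        fix n x y
        have "cmod (cinner x (A n e) - cinner y (A n e)) = cmod (cinner (x - y) (A n e))"
          by (simp add: cinner_diff_left)
        also have "\<dots> \<le> norm (x - y) * norm (A n e)" by (rule cauchy_schwarz)
        also have "\<dots> \<le> norm (x - y) * (K * norm e)"
          using An[of n e] Kk' by (intro mult_left_mono) auto
        finally show "cmod (cinner x (A n e) - cinner y (A n e)) \<le> K * norm e * norm (x - y)" by (simp add: algebra_simps)
      next
        fix x y
        have "cmod (cinner x (A0 e) - cinner y (A0 e)) = cmod (cinner (x - y) (A0 e))"
          by (simp add: cinner_diff_left)
        also have "\<dots> \<le> norm (x - y) * norm (A0 e)" by (rule cauchy_schwarz)
        also have "\<dots> \<le> norm (x - y) * (K * norm e)"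
          using A0n[of e] KA' by (intro mult_left_mono) auto
        finally show "cmod (cinner x (A0 e) - cinner y (A0 e)) \<le> K * norm e * norm (x - y)" by (simp add: algebra_simps)
      qed
      show "E \<subseteq> ?N" using weak_E[OF \<sigma> l lim e] by (auto simp: A_def A0_def)
    qed
    then show ?thesis by auto
  qed
  have step3: "(\<lambda>n. cinner w (A n v)) \<longlonglongrightarrow> cinner w (A0 v)" for v w
  proof -
    let ?V = "{v. \<forall>w. (\<lambda>n. cinner w (A n v)) \<longlonglongrightarrow> cinner w (A0 v)}"
    have "?V = UNIV"
    proof (rule perp_dense[OF perp])
      show "csubspace ?V"
        unfolding csubspace_def
      proof (intro conjI ballI allI)
        show "0 \<in> ?V" by (simp add: clinear_0 clA clA0)
        fix x y assume "x \<in> ?V" "y \<in> ?V"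
        then show "x + y \<in> ?V" using tendsto_add by (fastforce simp: clinear_add clA clA0 cinner_add_right)
      next
        fix c x assume "x \<in> ?V"
        then show "c *\<^sub>C x \<in> ?V" using tendsto_mult[OF tendsto_const]
          by (fastforce simp: clinear_scaleC clA clA0 cinner_scaleC_right)
      qed
      have "?V = (\<Inter>w. {v. (\<lambda>n. cinner w (A n v)) \<longlonglongrightarrow> cinner w (A0 v)})" by auto
      moreover have "closed {v. (\<lambda>n. cinner w (A n v)) \<longlonglongrightarrow> cinner w (A0 v)}" for w
      proof (rule closed_conv[where K="K * norm w"])
        fix n x y
        have "cmod (cinner w (A n x) - cinner w (A n y)) = cmod (cinner w (A n (x - y)))"
          by (simp add: cinner_diff_right clinear_diff clA)
        also have "\<dots> \<le> norm w * norm (A n (x - y))" by (rule cauchy_schwarz)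
        also have "\<dots> \<le> norm w * (K * norm (x - y))"
          using An[of n "x - y"] Kk' by (intro mult_left_mono) auto
        finally show "cmod (cinner w (A n x) - cinner w (A n y)) \<le> K * norm w * norm (x - y)" by (simp add: algebra_simps)
      next
        fix x y
        have "cmod (cinner w (A0 x) - cinner w (A0 y)) = cmod (cinner w (A0 (x - y)))"
          by (simp add: cinner_diff_right clinear_diff clA0)
        also have "\<dots> \<le> norm w * norm (A0 (x - y))" by (rule cauchy_schwarz)
        also have "\<dots> \<le> norm w * (K * norm (x - y))"
          using A0n[of "x - y"] KA' by (intro mult_left_mono) auto
        finally show "cmod (cinner w (A0 x) - cinner w (A0 y)) \<le> K * norm w * norm (x - y)" by (simp add: algebra_simps)
      qed
      ultimately show "closed ?V" by (simp add: closed_INT)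
      show "E \<subseteq> ?V" using step2 by auto
    qed
    then show ?thesis by auto
  qed
  have vb: "norm (A0 v) \<le> k * norm v" for v
  proof -
    have "cmod (cinner (A0 v) (A0 v)) \<le> norm (A0 v) * (k * norm v)"
    proof (rule LIMSEQ_le_const2)
      show "(\<lambda>n. cmod (cinner (A0 v) (A n v))) \<longlonglongrightarrow> cmod (cinner (A0 v) (A0 v))"
        by (intro tendsto_intros step3)
      show "\<exists>N. \<forall>n\<ge>N. cmod (cinner (A0 v) (A n v)) \<le> norm (A0 v) * (k * norm v)"
      proof (intro exI allI impI)
        fix n
        have "cmod (cinner (A0 v) (A n v)) \<le> norm (A0 v) * norm (A n v)" by (rule cauchy_schwarz)
        also have "\<dots> \<le> norm (A0 v) * (k * norm v)" by (intro mult_left_mono An) simp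
        finally show "cmod (cinner (A0 v) (A n v)) \<le> norm (A0 v) * (k * norm v)" .
      qed
    qed
    then have "norm (A0 v) * norm (A0 v) \<le> norm (A0 v) * (k * norm v)"
      by (simp add: cinner_self_eq power2_eq_square norm_mult)
    then show ?thesis
      by (cases "A0 v = 0") (auto simp: k0)
  qed
  show ?thesis unfolding A0_def[symmetric] by (rule onorm_bound[OF k0 vb])
qed

end

section \<open>Boundedness via Baire, final derivation result\<close>

context
  fixes \<Delta> :: "('a::chilbert_space \<Rightarrow> 'a) \<Rightarrow> ('a \<Rightarrow> 'a)" and E :: "'a set"
  assumes W: "weak_2_local_derivation \<Delta>"
    and perp: "\<And>z. (\<forall>e\<in>E. cinner e z = 0) \<Longrightarrow> z = 0"
begin

interpretation M: Metric_space "SE E" dop by (rule Metric_space_SE)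

lemma SE_mcomplete: "M.mcomplete"
  unfolding M.mcomplete_def
proof (intro allI impI)
  fix \<sigma> assume c: "M.MCauchy \<sigma>"
  then have \<sigma>S: "\<And>n. \<sigma> n \<in> SE E" by (auto simp: M.MCauchy_def)
  have \<sigma>K: "\<sigma> n \<in> KH" for n using \<sigma>S[of n] by (rule SE_KH)
  have "\<exists>x\<in>KH. (\<lambda>n. onorm (opsub (\<sigma> n) x)) \<longlonglongrightarrow> 0"
  proof (rule KH_complete[OF \<sigma>K])
    fix e :: real assume "e > 0"
    then obtain N where N: "\<And>n n'. N \<le> n \<Longrightarrow> N \<le> n' \<Longrightarrow> dop (\<sigma> n) (\<sigma> n') < e"
      using c unfolding M.MCauchy_def by blast
    then show "\<exists>N. \<forall>m\<ge>N. \<forall>n\<ge>N. onorm (opsub (\<sigma> m) (\<sigma> n)) < e"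
      using dop_KH[OF \<sigma>K \<sigma>K] by metis
  qed
  then obtain x where x: "x \<in> KH" "(\<lambda>n. onorm (opsub (\<sigma> n) x)) \<longlonglongrightarrow> 0" by blast
  have xS: "x \<in> SE E" by (rule SE_closed[OF \<sigma>S x])
  have "limitin M.mtopology \<sigma> x sequentially"
    unfolding M.limitin_metric
  proof (intro conjI allI impI xS)
    fix \<epsilon> :: real assume "\<epsilon> > 0"
    then have "\<forall>\<^sub>F n in sequentially. onorm (opsub (\<sigma> n) x) < \<epsilon>" using order_tendstoD(2)[OF x(2)] by blast
    then show "\<forall>\<^sub>F n in sequentially. \<sigma> n \<in> SE E \<and> dop (\<sigma> n) x < \<epsilon>"
      by eventually_elim (simp add: \<sigma>S dop_KH \<sigma>K x(1))
  qed
  then show "\<exists>x. limitin M.mtopology \<sigma> x sequentially" by blast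
qed

definition Fk :: "nat \<Rightarrow> ('a \<Rightarrow> 'a) set" where
  "Fk k = {x \<in> SE E. onorm (\<Delta> x) \<le> real k}"

lemma Fk_closedin: "closedin M.mtopology (Fk k)"
  unfolding M.metric_closedin_iff_sequentially_closed
proof (intro conjI allI impI)
  show "Fk k \<subseteq> SE E" by (auto simp: Fk_def)
  fix \<sigma> l assume a: "range \<sigma> \<subseteq> Fk k \<and> limitin M.mtopology \<sigma> l sequentially"
  then have \<sigma>S: "\<And>n. \<sigma> n \<in> SE E" and bnd: "\<And>n. onorm (\<Delta> (\<sigma> n)) \<le> real k" by (auto simp: Fk_def)
  from a have l: "l \<in> SE E" and lim: "(\<lambda>n. dop (\<sigma> n) l) \<longlonglongrightarrow> 0"
    unfolding M.limitin_metric_dist_null by auto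
  have "(\<lambda>n. dop (\<sigma> n) l) = (\<lambda>n. onorm (opsub (\<sigma> n) l))"
    by (intro ext dop_KH SE_KH[OF \<sigma>S] SE_KH[OF l])
  then have lim': "(\<lambda>n. onorm (opsub (\<sigma> n) l)) \<longlonglongrightarrow> 0" using lim by simp
  have "onorm (\<Delta> l) \<le> real k" using Fk_closed[OF W perp, where \<sigma>=\<sigma> and l=l and k="real k"] \<sigma>S l lim' bnd by blast
  then show "l \<in> Fk k" using l by (simp add: Fk_def)
qed

lemma SE_bounded: "\<exists>B. \<forall>z\<in>SE E. onorm (\<Delta> z) \<le> B * onorm z"
proof (cases "SE E = {}")
  case True then show ?thesis by auto
next
  case False
  have "\<exists>k. M.mtopology interior_of (Fk k) \<noteq> {}"
  proof (rule ccontr)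
    assume "\<not> ?thesis"
    then have emp: "\<And>k. M.mtopology interior_of (Fk k) = {}" by blast
    have "M.mtopology interior_of \<Union>(range Fk) = {}"
      by (rule M.metric_Baire_category_alt[OF SE_mcomplete]) (use emp Fk_closedin in auto)
    moreover have "\<Union>(range Fk) = SE E"
    proof
      show "\<Union>(range Fk) \<subseteq> SE E" by (auto simp: Fk_def)
      show "SE E \<subseteq> \<Union>(range Fk)"
      proof
        fix x assume "x \<in> SE E"
        moreover have "onorm (\<Delta> x) \<le> real (nat \<lceil>onorm (\<Delta> x)\<rceil>)" by linarith
        ultimately show "x \<in> \<Union>(range Fk)" by (auto simp: Fk_def)
      qed
    qed
    ultimately have "SE E = {}" by (metis M.topspace_mtopology interior_of_topspace)
    then show False using False by simp
  qed
  then obtain k x0 where x0: "x0 \<in> M.mtopology interior_of (Fk k)" by blast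
  have "openin M.mtopology (M.mtopology interior_of (Fk k))" by (rule openin_interior_of)
  then have "\<forall>x. x \<in> M.mtopology interior_of (Fk k) \<longrightarrow> (\<exists>r>0. M.mball x r \<subseteq> M.mtopology interior_of (Fk k))"
    unfolding M.openin_mtopology by blast
  then obtain r where r: "r > 0" "M.mball x0 r \<subseteq> M.mtopology interior_of (Fk k)"
    using x0 by blast
  have ball: "M.mball x0 r \<subseteq> Fk k" using r(2) interior_of_subset[of M.mtopology "Fk k"] by (rule subset_trans)
  have x0S: "x0 \<in> SE E" using x0 interior_of_subset[of M.mtopology "Fk k"] by (auto simp: Fk_def)
  have "x0 \<in> M.mball x0 r" using x0S r(1) by simp
  then have "x0 \<in> Fk k" using ball by (rule subsetD[rotated])
  then have x0b: "onorm (\<Delta> x0) \<le> real k" by (simp add: Fk_def)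
  show ?thesis
  proof (intro exI ballI)
    fix z assume zS: "z \<in> SE E"
    have zK: "z \<in> KH" using zS by (simp add: SE_KH)
    show "onorm (\<Delta> z) \<le> (4 * real k / r) * onorm z"
    proof (cases "onorm z = 0")
      case True
      then have z0: "z = (\<lambda>_. 0)" using onorm_eq_0[OF KH_bl[OF zK]] by auto
      then have "opscale 0 z = z" by (simp add: opscale_def)
      then have "\<Delta> z = opscale 0 (\<Delta> z)" using SE_scale_D[OF W perp zS, of 0] by simp
      then have "\<Delta> z = (\<lambda>_. 0)" by (simp add: opscale_def)
      then show ?thesis using True by (simp add: onorm_zero)
    next
      case False
      define t where "t = onorm z"
      have t: "t > 0" using False onorm_KH_nonneg[OF zK] by (simp add: t_def)
      define s where "s = r / (2 * t)"
      have s: "s > 0" using t r by (simp add: s_def)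
      define z' where "z' = opscale (complex_of_real s) z"
      have z'S: "z' \<in> SE E" by (simp add: z'_def SE_scale zS)
      have z'eq: "z' = (\<lambda>v. s *\<^sub>R z v)" by (simp add: z'_def opscale_def scaleC_of_real)
      have nz': "onorm z' = r / 2"
        using t r by (simp add: z'eq onorm_scaleR KH_bl[OF zK] s_def t_def[symmetric])
      define y where "y = opadd x0 z'"
      have yS: "y \<in> SE E" by (simp add: y_def SE_add x0S z'S)
      have "opsub x0 y = (\<lambda>v. - z' v)" by (simp add: y_def opsub_def opadd_def fun_eq_iff)
      then have "dop x0 y = r / 2" using nz' x0S yS by (simp add: dop_KH SE_KH onorm_neg)
      then have "y \<in> M.mball x0 r" using r x0S yS by simp
      then have yb: "onorm (\<Delta> y) \<le> real k" using ball by (auto simp: Fk_def)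
      have "\<Delta> y = opadd (\<Delta> x0) (\<Delta> z')" by (simp add: y_def SE_add_D[OF W perp x0S z'S])
      then have "\<Delta> z' = (\<lambda>v. \<Delta> y v + - \<Delta> x0 v)" by (simp add: opadd_def fun_eq_iff)
      moreover have "onorm (\<lambda>v. \<Delta> y v + - \<Delta> x0 v) \<le> onorm (\<Delta> y) + onorm (\<lambda>v. - \<Delta> x0 v)"
        by (intro onorm_triangle KH_bl[OF W_KH[OF W SE_KH[OF yS]]] bounded_linear_minus KH_bl[OF W_KH[OF W SE_KH[OF x0S]]])
      ultimately have "onorm (\<Delta> z') \<le> 2 * real k" using yb x0b by (simp add: onorm_neg)
      moreover have "\<Delta> z' = (\<lambda>v. s *\<^sub>R \<Delta> z v)"
        using SE_scale_D[OF W perp zS, of "complex_of_real s"] by (simp add: z'_def opscale_def scaleC_of_real)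
      moreover have "onorm (\<lambda>v. s *\<^sub>R \<Delta> z v) = s * onorm (\<Delta> z)"
        using s by (simp add: onorm_scaleR KH_bl W_KH[OF W zK])
      ultimately have "s * onorm (\<Delta> z) \<le> 2 * real k" by simp
      then have "onorm (\<Delta> z) \<le> 2 * real k / s" using s by (simp add: field_simps)
      also have "\<dots> = (4 * real k / r) * onorm z" using t r by (simp add: s_def t_def field_simps)
      finally show ?thesis .
    qed
  qed
qed

lemma SE_result: assumes C: "C \<subseteq> SE E" shows "cont_lin_derivation_on C \<Delta>"
  unfolding cont_lin_derivation_on_def
proof
  show "derivation_into_KH C \<Delta>"
    unfolding derivation_into_KH_def lin_on_def
  proof (intro conjI ballI allI)
    show "\<Delta> x \<in> KH" if "x \<in> C" for x using that C by (intro W_KH[OF W] SE_KH) auto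
    show "\<Delta> (opadd x y) = opadd (\<Delta> x) (\<Delta> y)" if "x \<in> C" "y \<in> C" for x y
      using that C by (intro SE_add_D[OF W perp]) auto
    show "\<Delta> (opscale c x) = opscale c (\<Delta> x)" if "x \<in> C" for c x
      using that C by (intro SE_scale_D[OF W perp]) auto
    show "\<Delta> (x \<circ> y) = opadd (\<Delta> x \<circ> y) (x \<circ> \<Delta> y)" if "x \<in> C" "y \<in> C" for x y
      using that C by (intro SE_comp_D[OF W perp]) auto
  qed
  obtain B where B: "\<And>z. z \<in> SE E \<Longrightarrow> onorm (\<Delta> z) \<le> B * onorm z" using SE_bounded by blast
  show "cont_on_ops C \<Delta>"
    unfolding cont_on_ops_def
  proof (intro allI impI, elim conjE)
    fix xs x assume xs: "\<forall>n. xs n \<in> C" and x: "x \<in> C" and lim: "(\<lambda>n. onorm (opsub (xs n) x)) \<longlonglongrightarrow> 0"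
    have xsS: "xs n \<in> SE E" for n using xs C by auto
    have xS: "x \<in> SE E" using x C by auto
    show "(\<lambda>n. onorm (opsub (\<Delta> (xs n)) (\<Delta> x))) \<longlonglongrightarrow> 0"
    proof (rule tendsto_sandwich[where f="\<lambda>n. 0" and h="\<lambda>n. B * onorm (opsub (xs n) x)"])
      show "\<forall>\<^sub>F n in sequentially. 0 \<le> onorm (opsub (\<Delta> (xs n)) (\<Delta> x))"
        by (intro always_eventually allI onorm_KH_nonneg KH_sub W_KH[OF W] SE_KH[OF xsS] SE_KH[OF xS])
      show "\<forall>\<^sub>F n in sequentially. onorm (opsub (\<Delta> (xs n)) (\<Delta> x)) \<le> B * onorm (opsub (xs n) x)"
        by (intro always_eventually allI) (use B[OF SE_sub[OF xsS xS]] SE_sub_D[OF W perp xsS xS] in simp)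
      show "(\<lambda>n. 0) \<longlonglongrightarrow> (0::real)" by simp
      show "(\<lambda>n. B * onorm (opsub (xs n) x)) \<longlonglongrightarrow> 0" using tendsto_mult[OF tendsto_const lim, of B] by simp
    qed
  qed
qed

end

section \<open>Eigenvectors of a compact self-adjoint operator are total\<close>

lemma spectral_perp:
  fixes a :: "'a::chilbert_space \<Rightarrow> 'a"
  assumes aK: "a \<in> KH" and sa: "self_adjoint a"
    and zp: "\<forall>e\<in>{e. \<exists>l. a e = l *\<^sub>C e}. cinner e z = 0"
  shows "z = 0"
proof (rule ccontr)
  assume z0: "z \<noteq> 0"
  let ?EV = "{e. \<exists>l. a e = l *\<^sub>C e}"
  define M where "M = {y. \<forall>e\<in>?EV. cinner e y = 0}"
  have adj: "cinner (a u) v = cinner u (a v)" for u v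
    using sa by (simp add: self_adjoint_def is_adjoint_def)
  have cl: "clinear a" and bl: "bounded_linear a" using aK by (simp_all add: KH_cl KH_bl)
  have Madd: "x + y \<in> M" if "x \<in> M" "y \<in> M" for x y using that by (simp add: M_def cinner_add_right)
  have Msc: "c *\<^sub>C x \<in> M" if "x \<in> M" for c x using that by (simp add: M_def cinner_scaleC_right)
  have MscR: "r *\<^sub>R x \<in> M" if "x \<in> M" for r x using Msc[OF that, of "complex_of_real r"] by (simp add: scaleC_of_real)
  have Minv: "a y \<in> M" if "y \<in> M" for y
  proof -
    have "cinner e (a y) = 0" if "e \<in> ?EV" for e
    proof -
      obtain l where l: "a e = l *\<^sub>C e" using \<open>e \<in> ?EV\<close> by blast
      have "cinner e (a y) = cinner (a e) y" by (simp add: adj)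
      also have "\<dots> = cnj l * cinner e y" by (simp add: l cinner_scaleC_left)
      finally show ?thesis using \<open>y \<in> M\<close> that by (simp add: M_def)
    qed
    then show ?thesis by (simp add: M_def)
  qed
  have Mclosed: "closed M"
  proof -
    have "M = (\<Inter>e\<in>?EV. {y. cinner e y = 0})" by (auto simp: M_def)
    moreover have "closed {y. cinner e y = 0}" for e
      by (intro closed_Collect_eq linear_continuous_on continuous_on_const bounded_linear_cinner_right)
    ultimately show ?thesis by (auto intro!: closed_INT)
  qed
  have notev: "y = 0" if "y \<in> M" "y \<in> ?EV" for y
  proof -
    have "cinner y y = 0" using that unfolding M_def by blast
    then show ?thesis by simp
  qed
  have zM: "z \<in> M" using zp by (simp add: M_def)
  define S where "S = {norm (a y) | y. y \<in> M \<and> norm y = 1}"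
  define s where "s = Sup S"
  have u0: "(1 / norm z) *\<^sub>R z \<in> M \<and> norm ((1 / norm z) *\<^sub>R z) = 1" using z0 zM MscR by simp
  have Sne: "S \<noteq> {}" using u0 by (auto simp: S_def)
  have Sbdd: "bdd_above S"
  proof (rule bdd_aboveI[where M="onorm a"])
    fix x assume "x \<in> S"
    then obtain y where "x = norm (a y)" "norm y = 1" by (auto simp: S_def)
    then show "x \<le> onorm a" using onorm[OF bl, of y] by simp
  qed
  have Sup_ge: "norm (a y) \<le> s" if "y \<in> M" "norm y = 1" for y
    unfolding s_def using that Sbdd by (intro cSup_upper) (auto simp: S_def)
  have s0: "0 \<le> s" using Sup_ge[of "(1 / norm z) *\<^sub>R z"] u0 by (meson norm_ge_zero order_trans)
  have bnd: "norm (a y) \<le> s * norm y" if "y \<in> M" for y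
  proof (cases "y = 0")
    case True then show ?thesis using cl by (simp add: clinear_0)
  next
    case False
    have "norm (a ((1 / norm y) *\<^sub>R y)) \<le> s" using False that MscR by (intro Sup_ge) auto
    then have "norm (a y) / norm y \<le> s" using False by (simp add: clinear_scaleR[OF cl])
    then show ?thesis using False by (simp add: divide_le_eq mult.commute)
  qed
  show False
  proof (cases "s = 0")
    case True
    then have "a z = 0" using bnd[OF zM] by simp
    then have "z \<in> ?EV" by (intro CollectI exI[where x=0]) simp
    then show False using notev zM z0 by blast
  next
    case False
    then have sp: "s > 0" using s0 by simp
    have "\<exists>y. y \<in> M \<and> norm y = 1 \<and> s - 1 / real (Suc n) < norm (a y)" for n
    proof -
      have "s - 1 / real (Suc n) < Sup S" by (simp add: s_def)
      then obtain x where "x \<in> S" "s - 1 / real (Suc n) < x" using less_cSup_iff[OF Sne Sbdd] by blast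
      then show ?thesis by (auto simp: S_def)
    qed
    then obtain zs where zs: "\<And>n. zs n \<in> M" "\<And>n. norm (zs n) = 1" "\<And>n. s - 1 / real (Suc n) < norm (a (zs n))"
      by metis
    have azs: "norm (a (zs n)) \<le> s" for n using bnd[OF zs(1)] zs(2) by simp
    have aazs: "norm (a (a (zs n))) \<le> s * norm (a (zs n))" for n using bnd[OF Minv[OF zs(1)]] .
    have err: "(\<lambda>n. a (a (zs n)) - (s\<^sup>2) *\<^sub>R zs n) \<longlonglongrightarrow> 0"
    proof -
      have sq: "(norm (a (a (zs n)) - (s\<^sup>2) *\<^sub>R zs n))\<^sup>2 \<le> 2 * s^3 * (1 / real (Suc n))" for n
      proof -
        let ?t = "norm (a (zs n))"
        have ci: "cinner (a (a (zs n))) (zs n) = cinner (a (zs n)) (a (zs n))" by (simp add: adj)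
        have "(norm (a (a (zs n)) - (s\<^sup>2) *\<^sub>R zs n))\<^sup>2
              = (norm (a (a (zs n))))\<^sup>2 + (s\<^sup>2)\<^sup>2 - 2 * s\<^sup>2 * ?t\<^sup>2"
          using zs(2)[of n] by (simp add: norm_diff_sq cinner_scaleR_right ci norm_sq_cinner[symmetric] power_mult_distrib)
        also have "\<dots> \<le> s\<^sup>2 * ?t\<^sup>2 + (s\<^sup>2)\<^sup>2 - 2 * s\<^sup>2 * ?t\<^sup>2"
        proof -
          have "(norm (a (a (zs n))))\<^sup>2 \<le> (s * ?t)\<^sup>2" using aazs[of n] by (simp add: power_mono)
          then show ?thesis by (simp add: power_mult_distrib)
        qed
        also have "\<dots> = s\<^sup>2 * ((s - ?t) * (s + ?t))" by (simp add: algebra_simps power2_eq_square)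
        also have "\<dots> \<le> s\<^sup>2 * ((1 / real (Suc n)) * (2 * s))"
        proof (intro mult_left_mono mult_mono)
          show "s - ?t \<le> 1 / real (Suc n)" using zs(3)[of n] by linarith
          show "s + ?t \<le> 2 * s" using azs[of n] by linarith
          show "0 \<le> 1 / real (Suc n)" by simp
          show "0 \<le> s + ?t" using s0 by simp
        qed simp
        also have "\<dots> = 2 * s^3 * (1 / real (Suc n))" by (simp add: power2_eq_square power3_eq_cube algebra_simps)
        finally show ?thesis .
      qed
      have lim0: "(\<lambda>n. 2 * s^3 * (1 / real (Suc n))) \<longlonglongrightarrow> 0"
        using tendsto_mult[OF tendsto_const LIMSEQ_inverse_real_of_nat, of "2 * s^3"] by (simp add: inverse_eq_divide)
      have "(\<lambda>n. (norm (a (a (zs n)) - (s\<^sup>2) *\<^sub>R zs n))\<^sup>2) \<longlonglongrightarrow> 0"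
      proof (rule tendsto_sandwich[OF _ _ tendsto_const lim0])
        show "\<forall>\<^sub>F n in sequentially. 0 \<le> (norm (a (a (zs n)) - (s\<^sup>2) *\<^sub>R zs n))\<^sup>2" by simp
        show "\<forall>\<^sub>F n in sequentially. (norm (a (a (zs n)) - (s\<^sup>2) *\<^sub>R zs n))\<^sup>2 \<le> 2 * s^3 * (1 / real (Suc n))"
          by (intro always_eventually allI sq)
      qed
      then have "(\<lambda>n. sqrt ((norm (a (a (zs n)) - (s\<^sup>2) *\<^sub>R zs n))\<^sup>2)) \<longlonglongrightarrow> sqrt 0"
        by (intro tendsto_real_sqrt)
      then have "(\<lambda>n. norm (a (a (zs n)) - (s\<^sup>2) *\<^sub>R zs n)) \<longlonglongrightarrow> 0" by simp
      then show ?thesis by (simp add: tendsto_norm_zero_iff)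
    qed
    have hb: "a ((1/2) *\<^sub>R zs n) \<in> closure (a ` ball 0 1)" for n
      using zs(2)[of n] by (intro closure_subset[THEN subsetD] imageI) simp
    obtain y' r where y': "strict_mono r" "((\<lambda>n. a ((1/2) *\<^sub>R zs n)) \<circ> r) \<longlonglongrightarrow> y'"
      using seq_compactE[OF compact_imp_seq_compact[OF KH_compact[OF aK]], of "\<lambda>n. a ((1/2) *\<^sub>R zs n)"] hb by blast
    have "(\<lambda>k. 2 *\<^sub>R a ((1/2) *\<^sub>R zs (r k))) \<longlonglongrightarrow> 2 *\<^sub>R y'"
      using y'(2) by (intro tendsto_scaleR tendsto_const) (simp add: comp_def)
    then have ay: "(\<lambda>k. a (zs (r k))) \<longlonglongrightarrow> 2 *\<^sub>R y'" by (simp add: clinear_scaleR[OF cl])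
    define y where "y = 2 *\<^sub>R y'"
    have aay: "(\<lambda>k. a (a (zs (r k)))) \<longlonglongrightarrow> a y"
      unfolding y_def by (rule bounded_linear.tendsto[OF bl ay])
    have errr: "(\<lambda>k. a (a (zs (r k))) - (s\<^sup>2) *\<^sub>R zs (r k)) \<longlonglongrightarrow> 0"
      using LIMSEQ_subseq_LIMSEQ[OF err y'(1)] by (simp add: comp_def)
    have "(\<lambda>k. a (a (zs (r k))) - (a (a (zs (r k))) - (s\<^sup>2) *\<^sub>R zs (r k))) \<longlonglongrightarrow> a y - 0"
      by (intro tendsto_diff aay errr)
    then have "(\<lambda>k. (s\<^sup>2) *\<^sub>R zs (r k)) \<longlonglongrightarrow> a y" by simp
    then have "(\<lambda>k. (1 / s\<^sup>2) *\<^sub>R ((s\<^sup>2) *\<^sub>R zs (r k))) \<longlonglongrightarrow> (1 / s\<^sup>2) *\<^sub>R a y"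
      by (intro tendsto_scaleR tendsto_const)
    then have zlim: "(\<lambda>k. zs (r k)) \<longlonglongrightarrow> (1 / s\<^sup>2) *\<^sub>R a y" using sp by simp
    define v where "v = (1 / s\<^sup>2) *\<^sub>R a y"
    have nv: "norm v = 1"
    proof -
      have "(\<lambda>k. norm (zs (r k))) \<longlonglongrightarrow> norm v" unfolding v_def by (intro tendsto_norm zlim)
      then have "(\<lambda>k. 1::real) \<longlonglongrightarrow> norm v" using zs(2) by simp
      then show ?thesis using LIMSEQ_unique[OF tendsto_const] by metis
    qed
    have vM: "v \<in> M" unfolding v_def using closed_sequentially[OF Mclosed _ zlim] zs(1) by blast
    have "(\<lambda>k. a (zs (r k))) \<longlonglongrightarrow> a v" unfolding v_def by (rule bounded_linear.tendsto[OF bl zlim])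
    then have avy: "a v = y" using ay LIMSEQ_unique unfolding y_def by blast
    have "(\<lambda>k. (s\<^sup>2) *\<^sub>R zs (r k)) \<longlonglongrightarrow> (s\<^sup>2) *\<^sub>R v" unfolding v_def by (intro tendsto_scaleR tendsto_const zlim)
    moreover have "(\<lambda>k. (s\<^sup>2) *\<^sub>R zs (r k)) \<longlonglongrightarrow> a y" by fact
    ultimately have aav: "a (a v) = (s\<^sup>2) *\<^sub>R v" using avy LIMSEQ_unique by metis
    define w where "w = a v + s *\<^sub>R v"
    have aw: "a w = complex_of_real s *\<^sub>C w"
    proof -
      have "a w = a (a v) + s *\<^sub>R a v" by (simp add: w_def clinear_add[OF cl] clinear_scaleR[OF cl])
      also have "\<dots> = s *\<^sub>R w" by (simp add: aav w_def power2_eq_square scaleR_add_right)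
      finally show ?thesis by (simp add: scaleC_of_real)
    qed
    have wM: "w \<in> M" unfolding w_def by (intro Madd Minv vM MscR)
    have "w = 0" using notev[OF wM] aw by blast
    then have "a v = (- complex_of_real s) *\<^sub>C v"
      by (simp add: w_def scaleC_minus_left scaleC_of_real eq_neg_iff_add_eq_0)
    then have "v = 0" using notev[OF vM] by blast
    then show False using nv by simp
  qed
qed

lemma t1: "minimal_projection_KH p \<Longrightarrow> projection_KH p"
  unfolding minimal_projection_KH_def by (erule conjunct1)
lemma t2: "projection_KH (p::'a::chilbert_space \<Rightarrow> 'a) \<Longrightarrow> p \<in> KH"
  unfolding projection_KH_def by (erule conjunct1)
lemma t3: "projection_KH (p::'a::chilbert_space \<Rightarrow> 'a) \<Longrightarrow> p \<circ> p = p"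
  unfolding projection_KH_def by (elim conjE)
lemma t4: "projection_KH (p::'a::chilbert_space \<Rightarrow> 'a) \<Longrightarrow> is_adjoint p p"
  unfolding projection_KH_def self_adjoint_def by (elim conjE)

lemma part1:
  fixes \<Delta> :: "('a::chilbert_space \<Rightarrow> 'a) \<Rightarrow> ('a \<Rightarrow> 'a)" and a :: "'a \<Rightarrow> 'a"
  assumes aK: "a \<in> KH" and sa: "self_adjoint a" and W: "weak_2_local_derivation \<Delta>"
  shows "cont_lin_derivation_on (cstar_gen {a}) \<Delta>"
proof -
  let ?E = "{e. \<exists>l. a e = l *\<^sub>C e}"
  have perp: "z = 0" if "\<forall>e\<in>?E. cinner e z = 0" for z
    by (rule spectral_perp[OF aK sa that])
  have eig': "\<forall>e\<in>?E. eigv a e" unfolding eigv_def by blast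
  have "a \<in> SE ?E" unfolding SE_def
  proof (intro CollectI conjI bexI[where x=a])
    show "a \<in> KH" "a \<in> KH" by (rule aK)+
    show "is_adjoint a a" using sa by (simp add: self_adjoint_def)
    show "\<forall>e\<in>?E. eigv a e" "\<forall>e\<in>?E. eigv a e" by (rule eig')+
  qed
  then have sub: "cstar_gen {a} \<subseteq> SE ?E" by (intro cstar_gen_SE) simp
  show ?thesis
    apply (rule SE_result)
      apply (rule W)
     apply (rule perp, assumption)
    apply (rule sub)
    done
qed

lemma part2:
  fixes \<Delta> :: "('a::chilbert_space \<Rightarrow> 'a) \<Rightarrow> ('a \<Rightarrow> 'a)" and P :: "('a \<Rightarrow> 'a) set"
  assumes W: "weak_2_local_derivation \<Delta>"
    and min: "\<forall>p\<in>P. minimal_projection_KH p"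
    and orth: "\<forall>p\<in>P. \<forall>q\<in>P. p \<noteq> q \<longrightarrow> p \<circ> q = (\<lambda>_. 0)"
  shows "cont_lin_derivation_on (cstar_gen P) \<Delta>"
proof -
  let ?E = "(\<Union>p\<in>P. range p) \<union> {e. \<forall>p\<in>P. p e = 0}"
  have pp: "projection_KH p" if "p \<in> P" for p
    using min that t1 by blast
  have proj: "p \<in> KH" "p \<circ> p = p" "is_adjoint p p" if "p \<in> P" for p
    using pp[OF that] by (rule t2) (rule t3[OF pp[OF that]], rule t4[OF pp[OF that]])
  have perp: "z = 0" if zp: "\<forall>e\<in>?E. cinner e z = 0" for z
  proof -
    have "p z = 0" if p: "p \<in> P" for p
    proof -
      have "p z \<in> ?E" using p by blast
      then have "cinner (p z) z = 0" using zp by blast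
      have "cinner (p z) (p z) = cinner z (p (p z))" using proj(3)[OF p] by (simp add: is_adjoint_def)
      also have "\<dots> = cinner z (p z)" using proj(2)[OF p] by (metis comp_apply)
      also have "\<dots> = cnj (cinner (p z) z)" by (rule cinner_commute)
      also have "\<dots> = 0" using \<open>cinner (p z) z = 0\<close> by simp
      finally show ?thesis by simp
    qed
    then have "z \<in> {e. \<forall>p\<in>P. p e = 0}" by simp
    then have "z \<in> ?E" by (rule UnI2)
    then have "cinner z z = 0" using zp by blast
    then show ?thesis by simp
  qed
  have "P \<subseteq> SE ?E"
  proof
    fix p assume p: "p \<in> P"
    have eig: "eigv p e" if "e \<in> ?E" for e
    proof -
      from that consider (r) q v where "q \<in> P" "e = q v" | (k) "\<forall>q\<in>P. q e = 0"
        by (auto simp: image_iff)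
      then show ?thesis
      proof cases
        case r
        show ?thesis
        proof (cases "p = q")
          case True
          have "p e = (p \<circ> p) v" using r True by simp
          also have "\<dots> = e" using proj(2)[OF p] r True by simp
          finally have "p e = 1 *\<^sub>C e" by (simp add: scaleC_one)
          then show ?thesis unfolding eigv_def by blast
        next
          case False
          have "p e = (p \<circ> q) v" using r by simp
          also have "p \<circ> q = (\<lambda>_. 0)" using orth p r(1) False by blast
          finally have "p e = 0 *\<^sub>C e" by simp
          then show ?thesis unfolding eigv_def by blast
        qed
      next
        case k
        then have "p e = 0 *\<^sub>C e" using p by simp
        then show ?thesis unfolding eigv_def by blast
      qed
    qed
    have eig': "\<forall>e\<in>?E. eigv p e" using eig by blast
    show "p \<in> SE ?E" unfolding SE_def
    proof (intro CollectI conjI bexI[where x=p])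
      show "p \<in> KH" "is_adjoint p p" using proj[OF p] by auto
      show "\<forall>e\<in>?E. eigv p e" by (rule eig')
      show "\<forall>e\<in>?E. eigv p e" by (rule eig')
      show "p \<in> KH" using proj[OF p] by auto
    qed
  qed
  then have sub: "cstar_gen P \<subseteq> SE ?E" by (rule cstar_gen_SE)
  show ?thesis
    apply (rule SE_result)
      apply (rule W)
     apply (rule perp, assumption)
    apply (rule sub)
    done
qed

theorem theorem3p7:
  fixes \<Delta> :: "('a::chilbert_space \<Rightarrow> 'a) \<Rightarrow> ('a \<Rightarrow> 'a)"
    and a :: "'a \<Rightarrow> 'a"
  assumes "a \<in> KH" and "self_adjoint a"
    and "weak_2_local_derivation \<Delta>"
  shows "cont_lin_derivation_on (cstar_gen {a}) \<Delta>
    \<and> (\<forall>P. countable P \<and> (\<forall>p\<in>P. minimal_projection_KH p)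
          \<and> (\<forall>p\<in>P. \<forall>q\<in>P. p \<noteq> q \<longrightarrow> p \<circ> q = (\<lambda>_. 0))
          \<longrightarrow> cont_lin_derivation_on (cstar_gen P) \<Delta>)"
proof (intro conjI allI impI)
  show "cont_lin_derivation_on (cstar_gen {a}) \<Delta>" by (rule part1[OF assms])
  fix P :: "('a \<Rightarrow> 'a) set"
  assume h: "countable P \<and> (\<forall>p\<in>P. minimal_projection_KH p) \<and> (\<forall>p\<in>P. \<forall>q\<in>P. p \<noteq> q \<longrightarrow> p \<circ> q = (\<lambda>_. 0))"
  have m: "\<forall>p\<in>P. minimal_projection_KH p" using h[THEN conjunct2, THEN conjunct1] .
  have o: "\<forall>p\<in>P. \<forall>q\<in>P. p \<noteq> q \<longrightarrow> p \<circ> q = (\<lambda>_. 0)" using h[THEN conjunct2, THEN conjunct2] .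
  show "cont_lin_derivation_on (cstar_gen P) \<Delta>" by (rule part2[OF assms(3) m o])
qed

end
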